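(* Let $f_1,\dots,f_{t-1}$ be polynomials $f_s(z)=\sum_{d=0}^Dc_{s,d}z^d$, $f_0(z)=z$, let $\tau_0^2>0$ and define $\tau_{s+1}^2=\mathbb E[f_s(\tau_sZ)^2]$, $Z\sim\mathcal N(0,1)$. For integers $t\ge1$, $m\ge1$, \[ \tau_t^{2m}\,(2m-1)!!=\sum_{T\in\mathbb T_{t,2m}}\mathrm{Wick}(T)\prod_{v}c_v\cdot\tau_0^{|L(T)|}, \] where $L(T)$ is the set of level-$0$ vertices of $T$.
   Context: $\mathbb T_{t,2m}$ is the set of rooted ordered trees obtained as follows: the root is at level $t$ and has $2m$ children (root weight $c_{\text{root}}=1$); each vertex $v$ at level $s\in\{1,\dots,t-1\}$ is assigned a degree $d\in\{0,\dots,D\}$, receives weight $c_v=c_{s,d}$ and has exactly $d$ children at level $s-1$; level-0 vertices are leaves with weight $1$. Distinct choices of degrees give distinct trees. For a rooted tree $T$, let $V_\ell$ be the set of vertices at distance $\ell$ from the root and $p(v)$ the parent of $v$; a row-wise Wick pairing is a family $(\pi_\ell)_{\ell\ge1}$ with $\pi_\ell$ a partition of $V_\ell$ into unordered pairs such that for each pair $\{v,v'\}\in\pi_\ell$, $\ell\ge2$, the parents $p(v),p(v')$ are equal or form a pair of $\pi_{\ell-1}$; $\mathrm{Wick}(T)$ is the number of such families. *)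

theory Defs
  imports "HOL-Probability.Probability"
begin

datatype otree = Node "otree list"

fun children :: "otree \<Rightarrow> otree list" where
  "children (Node cs) = cs"

text \<open>valid D s T: T is a subtree whose root sits at level s; level-0 vertices are
  leaves, vertices at level s \<ge> 1 have degree in {0..D}.\<close>
fun valid :: "nat \<Rightarrow> nat \<Rightarrow> otree \<Rightarrow> bool" where
  "valid D 0 (Node cs) = (cs = [])"
| "valid D (Suc s) (Node cs) = (length cs \<le> D \<and> (\<forall>c\<in>set cs. valid D s c))"

definition trees :: "nat \<Rightarrow> nat \<Rightarrow> nat \<Rightarrow> otree set" where
  "trees D t m = {Node cs | cs. length cs = 2 * m \<and> (\<forall>c\<in>set cs. valid D (t - 1) c)}"

fun subweight :: "(nat \<Rightarrow> nat \<Rightarrow> real) \<Rightarrow> nat \<Rightarrow> otree \<Rightarrow> real" where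
  "subweight c 0 (Node cs) = 1"
| "subweight c (Suc s) (Node cs) = c (Suc s) (length cs) * prod_list (map (subweight c s) cs)"

definition tree_weight :: "(nat \<Rightarrow> nat \<Rightarrow> real) \<Rightarrow> nat \<Rightarrow> otree \<Rightarrow> real" where
  "tree_weight c t T = prod_list (map (subweight c (t - 1)) (children T))"

fun level0 :: "nat \<Rightarrow> otree \<Rightarrow> nat" where
  "level0 0 (Node cs) = 1"
| "level0 (Suc s) (Node cs) = sum_list (map (level0 s) cs)"

definition num_leaves :: "nat \<Rightarrow> otree \<Rightarrow> nat" where
  "num_leaves t T = sum_list (map (level0 (t - 1)) (children T))"

text \<open>Vertices are addressed by paths (lists of child indices) from the root.\<close>
function positions :: "otree \<Rightarrow> nat list set" where
  "positions (Node cs) = insert [] (\<Union>i\<in>{..<length cs}. (#) i ` positions (cs ! i))"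
  by pat_completeness auto
termination
  by (relation "Wellfounded.measure size") (auto simp: less_Suc_eq_le intro!: size_list_estimation' nth_mem)

text \<open>V_l: vertices at distance l from the root; the parent of v is butlast v.\<close>
definition verts_at :: "otree \<Rightarrow> nat \<Rightarrow> nat list set" where
  "verts_at T l = {p \<in> positions T. length p = l}"

definition is_pairing :: "'a set \<Rightarrow> 'a set set \<Rightarrow> bool" where
  "is_pairing S P \<longleftrightarrow> (\<forall>e\<in>P. card e = 2 \<and> e \<subseteq> S) \<and> (\<forall>x\<in>S. \<exists>!e. e \<in> P \<and> x \<in> e)"

text \<open>Row-wise Wick pairings (pi_l)_{l \<ge> 1}; the unused index 0 is normalised to {}.\<close>
definition wick_pairings :: "otree \<Rightarrow> (nat \<Rightarrow> nat list set set) set" where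
  "wick_pairings T = {\<pi>. \<pi> 0 = {} \<and> (\<forall>l\<ge>1. is_pairing (verts_at T l) (\<pi> l)) \<and>
      (\<forall>l\<ge>2. \<forall>v v'. {v, v'} \<in> \<pi> l \<longrightarrow>
          butlast v = butlast v' \<or> {butlast v, butlast v'} \<in> \<pi> (l - 1))}"

definition Wick :: "otree \<Rightarrow> nat" where
  "Wick T = card (wick_pairings T)"

definition fpoly :: "(nat \<Rightarrow> nat \<Rightarrow> real) \<Rightarrow> nat \<Rightarrow> nat \<Rightarrow> real \<Rightarrow> real" where
  "fpoly c D s z = (if s = 0 then z else (\<Sum>d\<le>D. c s d * z ^ d))"

fun tau2 :: "(nat \<Rightarrow> nat \<Rightarrow> real) \<Rightarrow> nat \<Rightarrow> real \<Rightarrow> nat \<Rightarrow> real" where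
  "tau2 c D tau0 0 = tau0 ^ 2"
| "tau2 c D tau0 (Suc s) =
     (\<integral>x. std_normal_density x * (fpoly c D s (sqrt (tau2 c D tau0 s) * x))^2 \<partial>lborel)"

definition odd_dfact :: "nat \<Rightarrow> nat" where
  "odd_dfact m = (\<Prod>i<m. 2 * i + 1)"

end

theory Submission
  imports Defs
begin

definition rowv :: "nat list set \<Rightarrow> nat \<Rightarrow> nat list set" where
  "rowv V l = {v\<in>V. length v = l}"

definition wpset :: "nat list set \<Rightarrow> nat \<Rightarrow> (nat \<Rightarrow> nat list set set) set" where
  "wpset V L = {\<pi>. (\<forall>l<L. \<pi> l = {}) \<and> (\<forall>l\<ge>L. is_pairing (rowv V l) (\<pi> l)) \<and>
      (\<forall>l>L. \<forall>v v'. {v, v'} \<in> \<pi> l \<longrightarrow>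
          butlast v = butlast v' \<or> {butlast v, butlast v'} \<in> \<pi> (l - 1))}"

lemma pairing_elem: "is_pairing S P \<Longrightarrow> e \<in> P \<Longrightarrow> \<exists>a b. e = {a,b} \<and> a \<noteq> b \<and> a \<in> S \<and> b \<in> S"
  unfolding is_pairing_def by (metis card_2_iff insert_subset)

lemma pairing_uniq: "is_pairing S P \<Longrightarrow> e \<in> P \<Longrightarrow> e' \<in> P \<Longrightarrow> z \<in> e \<Longrightarrow> z \<in> e' \<Longrightarrow> e = e'"
  unfolding is_pairing_def by (metis subsetD)

lemma pairing_ex: "is_pairing S P \<Longrightarrow> z \<in> S \<Longrightarrow> \<exists>z'. z' \<noteq> z \<and> {z,z'} \<in> P"
proof -
  assume a: "is_pairing S P" "z \<in> S"
  then obtain e where "e \<in> P" "z \<in> e" unfolding is_pairing_def by blast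
  with pairing_elem[OF a(1) this(1)] show ?thesis by (metis insert_commute insertE singletonD)
qed

lemma pairing_empty: "is_pairing {} P \<longleftrightarrow> P = {}"
  unfolding is_pairing_def by (auto simp: card_2_iff)

lemma wp_sub: "\<pi> \<in> wpset V L \<Longrightarrow> e \<in> \<pi> l \<Longrightarrow> e \<subseteq> rowv V l"
  unfolding wpset_def is_pairing_def by (cases "l < L") auto

lemma wp_anc:
  assumes "\<pi> \<in> wpset V L" "l \<ge> L" "{v, v'} \<in> \<pi> l"
  shows "take L v = take L v' \<or> {take L v, take L v'} \<in> \<pi> L"
  using assms(2,3)
proof (induction l arbitrary: v v' rule: dec_induct)
  case base
  then have "v \<in> rowv V L" "v' \<in> rowv V L"
    using wp_sub[OF assms(1)] by auto
  then show ?case using base by (simp add: rowv_def)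
next
  case (step n)
  then have "butlast v = butlast v' \<or> {butlast v, butlast v'} \<in> \<pi> n"
  proof -
    have "\<forall>l>L. \<forall>v v'. {v, v'} \<in> \<pi> l \<longrightarrow>
          butlast v = butlast v' \<or> {butlast v, butlast v'} \<in> \<pi> (l - 1)"
      using assms(1) unfolding wpset_def by blast
    moreover have "Suc n > L" using step(1) by simp
    ultimately show ?thesis using step(4) by fastforce
  qed
  moreover have "v \<in> rowv V (Suc n)" "v' \<in> rowv V (Suc n)"
    using wp_sub[OF assms(1) step(4)] by auto
  then have "take L (butlast v) = take L v" "take L (butlast v') = take L v'"
    using step(1) by (auto simp: rowv_def butlast_conv_take min_def)
  ultimately show ?case using step.IH by metis
qed

lemma take_butlast_eq: "L < length v \<Longrightarrow> take L (butlast v) = take L v"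
  by (simp add: take_butlast)

lemma wp_pairing: "\<pi> \<in> wpset V L \<Longrightarrow> l \<ge> L \<Longrightarrow> is_pairing (rowv V l) (\<pi> l)"
  unfolding wpset_def by blast

lemma wp_low: "\<pi> \<in> wpset V L \<Longrightarrow> l < L \<Longrightarrow> \<pi> l = {}"
  unfolding wpset_def by blast

lemma wp_par: "\<pi> \<in> wpset V L \<Longrightarrow> l > L \<Longrightarrow> {v, v'} \<in> \<pi> l \<Longrightarrow>
   butlast v = butlast v' \<or> {butlast v, butlast v'} \<in> \<pi> (l - 1)"
  unfolding wpset_def by blast

lemma wp_blk:
  assumes "\<pi> \<in> wpset V L" "{x,y} \<in> \<pi> L" "l \<ge> L" "{a,b} \<in> \<pi> l" "take L a \<in> {x,y}"
  shows "take L b \<in> {x,y}"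
proof -
  from wp_anc[OF assms(1,3,4)]
  show ?thesis
  proof
    assume "take L a = take L b" then show ?thesis using assms(5) by simp
  next
    assume h: "{take L a, take L b} \<in> \<pi> L"
    have "{take L a, take L b} = {x,y}"
      using pairing_uniq[OF wp_pairing[OF assms(1) order_refl] h assms(2), of "take L a"] assms(5)
      by simp
    then show ?thesis by auto
  qed
qed

lemma wp_elem_len: "\<pi> \<in> wpset V L \<Longrightarrow> {a,b} \<in> \<pi> l \<Longrightarrow> a \<in> V \<and> length a = l \<and> b \<in> V \<and> length b = l"
  using wp_sub[of \<pi> V L "{a,b}" l] by (auto simp: rowv_def)

lemma wp_elem_ex: "\<pi> \<in> wpset V L \<Longrightarrow> e \<in> \<pi> l \<Longrightarrow> \<exists>a b. e = {a,b} \<and> a \<noteq> b"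
proof (cases "l < L")
  case True
  assume "\<pi> \<in> wpset V L" "e \<in> \<pi> l" then show ?thesis using wp_low True by blast
next
  case False
  assume a: "\<pi> \<in> wpset V L" "e \<in> \<pi> l"
  show ?thesis using pairing_elem[OF wp_pairing[OF a(1)] a(2)] False by auto
qed

lemma wpD:
  assumes \<pi>: "\<pi> \<in> wpset V L" and xy: "{x,y} \<in> \<pi> L"
    and Dd: "Dxy = {v\<in>V. length v > L \<and> take L v \<in> {x,y}}"
  shows "(\<lambda>l. {e\<in>\<pi> l. e \<subseteq> Dxy}) \<in> wpset Dxy (Suc L)"
  unfolding wpset_def
proof (intro CollectI conjI allI impI)
  fix l :: nat assume l: "l < Suc L"
  show "{e\<in>\<pi> l. e \<subseteq> Dxy} = {}"
  proof (rule ccontr)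
    assume "{e\<in>\<pi> l. e \<subseteq> Dxy} \<noteq> {}"
    then obtain e where e: "e \<in> \<pi> l" "e \<subseteq> Dxy" by blast
    then obtain a b where "e = {a,b}" using wp_elem_ex[OF \<pi>] by blast
    then show False using e wp_elem_len[OF \<pi>, of a b l] l Dd by auto
  qed
next
  fix l :: nat assume l: "Suc L \<le> l"
  show "is_pairing (rowv Dxy l) {e \<in> \<pi> l. e \<subseteq> Dxy}"
    unfolding is_pairing_def
  proof (rule conjI)
    show "\<forall>e \<in> {e \<in> \<pi> l. e \<subseteq> Dxy}. card e = 2 \<and> e \<subseteq> rowv Dxy l"
      using wp_pairing[OF \<pi>, of l] l unfolding is_pairing_def rowv_def by auto
  next
    show "\<forall>z \<in> rowv Dxy l. \<exists>!e. e \<in> {e \<in> \<pi> l. e \<subseteq> Dxy} \<and> z \<in> e"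
    proof
    fix z assume z: "z \<in> rowv Dxy l"
    then have zV: "z \<in> rowv V l" using Dd by (auto simp: rowv_def)
    obtain z' where z': "z' \<noteq> z" "{z,z'} \<in> \<pi> l"
      using pairing_ex[OF wp_pairing[OF \<pi>] zV] l by auto
    have "take L z' \<in> {x,y}"
      using wp_blk[OF \<pi> xy _ z'(2)] z Dd l by (auto simp: rowv_def)
    moreover have "z' \<in> V" "length z' = l" using wp_elem_len[OF \<pi> z'(2)] by auto
    ultimately have "{z,z'} \<subseteq> Dxy" using z Dd l by (auto simp: rowv_def)
    then show "\<exists>!e. e \<in> {e \<in> \<pi> l. e \<subseteq> Dxy} \<and> z \<in> e"
      using z' pairing_uniq[OF wp_pairing[OF \<pi>, of l]] l
      by (intro ex1I[of _ "{z,z'}"]) auto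
  qed
  qed
next
  fix l :: nat and v v' assume l: "Suc L < l" and vv: "{v, v'} \<in> {e \<in> \<pi> l. e \<subseteq> Dxy}"
  then have "butlast v = butlast v' \<or> {butlast v, butlast v'} \<in> \<pi> (l - 1)"
    using wp_par[OF \<pi>] by auto
  moreover
  have "{butlast v, butlast v'} \<in> \<pi> (l - 1) \<Longrightarrow> {butlast v, butlast v'} \<subseteq> Dxy"
  proof -
    assume h: "{butlast v, butlast v'} \<in> \<pi> (l - 1)"
    have "length v = l" "length v' = l" "v \<in> Dxy" "v' \<in> Dxy" using vv wp_elem_len[OF \<pi>, of v v' l] by auto
    moreover have "butlast v \<in> V" "butlast v' \<in> V" using wp_elem_len[OF \<pi> h] by auto
    ultimately show ?thesis using Dd l take_butlast_eq[of L v] take_butlast_eq[of L v'] by auto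
  qed
  ultimately show "butlast v = butlast v' \<or> {butlast v, butlast v'} \<in> {e \<in> \<pi> (l - 1). e \<subseteq> Dxy}"
    by auto
qed

lemma wpR:
  assumes \<pi>: "\<pi> \<in> wpset V L" and xy: "{x,y} \<in> \<pi> L"
    and Rd: "R = {v\<in>V. take L v \<notin> {x,y}}"
  shows "(\<lambda>l. {e\<in>\<pi> l. e \<subseteq> R}) \<in> wpset R L"
  unfolding wpset_def
proof (intro CollectI conjI allI impI)
  fix l :: nat assume l: "l < L"
  show "{e\<in>\<pi> l. e \<subseteq> R} = {}" using wp_low[OF \<pi> l] by simp
next
  fix l :: nat assume l: "L \<le> l"
  show "is_pairing (rowv R l) {e \<in> \<pi> l. e \<subseteq> R}"
    unfolding is_pairing_def
  proof (rule conjI)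
    show "\<forall>e \<in> {e \<in> \<pi> l. e \<subseteq> R}. card e = 2 \<and> e \<subseteq> rowv R l"
      using wp_pairing[OF \<pi>, of l] l unfolding is_pairing_def rowv_def by auto
  next
    show "\<forall>z \<in> rowv R l. \<exists>!e. e \<in> {e \<in> \<pi> l. e \<subseteq> R} \<and> z \<in> e"
    proof
    fix z assume z: "z \<in> rowv R l"
    then have zV: "z \<in> rowv V l" using Rd by (auto simp: rowv_def)
    obtain z' where z': "z' \<noteq> z" "{z,z'} \<in> \<pi> l"
      using pairing_ex[OF wp_pairing[OF \<pi>] zV] l by auto
    have z'2: "{z',z} \<in> \<pi> l" using z' by (simp add: insert_commute)
    have "take L z' \<notin> {x,y}"
      using wp_blk[OF \<pi> xy l z'2] z Rd by (auto simp: rowv_def)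
    moreover have "z' \<in> V" "length z' = l" using wp_elem_len[OF \<pi> z'(2)] by auto
    ultimately have "{z,z'} \<subseteq> R" using z Rd l by (auto simp: rowv_def)
    then show "\<exists>!e. e \<in> {e \<in> \<pi> l. e \<subseteq> R} \<and> z \<in> e"
      using z' pairing_uniq[OF wp_pairing[OF \<pi>, of l]] l
      by (intro ex1I[of _ "{z,z'}"]) auto
  qed
  qed
next
  fix l :: nat and v v' assume l: "L < l" and vv: "{v, v'} \<in> {e \<in> \<pi> l. e \<subseteq> R}"
  then have "butlast v = butlast v' \<or> {butlast v, butlast v'} \<in> \<pi> (l - 1)"
    using wp_par[OF \<pi>] by auto
  moreover
  have "{butlast v, butlast v'} \<in> \<pi> (l - 1) \<Longrightarrow> {butlast v, butlast v'} \<subseteq> R"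
  proof -
    assume h: "{butlast v, butlast v'} \<in> \<pi> (l - 1)"
    have "length v = l" "length v' = l" "v \<in> R" "v' \<in> R" using vv wp_elem_len[OF \<pi>, of v v' l] by auto
    moreover have "butlast v \<in> V" "butlast v' \<in> V" using wp_elem_len[OF \<pi> h] by auto
    ultimately show ?thesis using Rd l take_butlast_eq[of L v] take_butlast_eq[of L v'] by auto
  qed
  ultimately show "butlast v = butlast v' \<or> {butlast v, butlast v'} \<in> {e \<in> \<pi> (l - 1). e \<subseteq> R}"
    by auto
qed

lemma card2I: "a \<noteq> b \<Longrightarrow> card {a,b} = 2" by simp

lemma wpPsi:
  assumes \<sigma>: "\<sigma> \<in> wpset Dxy (Suc L)" and \<rho>: "\<rho> \<in> wpset R L"
    and x: "x \<in> rowv V L" and y: "y \<in> rowv V L" and xy: "x \<noteq> y"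
    and lenV: "\<forall>v\<in>V. length v \<ge> L"
    and Dd: "Dxy = {v\<in>V. length v > L \<and> take L v \<in> {x,y}}"
    and Rd: "R = {v\<in>V. take L v \<notin> {x,y}}"
  shows "(\<lambda>l. \<sigma> l \<union> \<rho> l \<union> (if l = L then {{x,y}} else {})) \<in> wpset V L"
  unfolding wpset_def
proof (intro CollectI conjI allI impI)
  fix l :: nat assume l: "l < L"
  show "\<sigma> l \<union> \<rho> l \<union> (if l = L then {{x,y}} else {}) = {}"
    using wp_low[OF \<sigma>, of l] wp_low[OF \<rho> l] l by simp
next
  fix l :: nat assume l: "L \<le> l"
  let ?P = "\<sigma> l \<union> \<rho> l \<union> (if l = L then {{x,y}} else {})"
  have DV: "rowv Dxy l \<subseteq> rowv V l" "rowv R l \<subseteq> rowv V l" using Dd Rd by (auto simp: rowv_def)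
  have xyV: "{x,y} \<subseteq> rowv V L" using x y by auto
  have sD: "e \<in> \<sigma> l \<Longrightarrow> e \<subseteq> Dxy" for e using wp_sub[OF \<sigma>] by (auto simp: rowv_def)
  have rR: "e \<in> \<rho> l \<Longrightarrow> e \<subseteq> R" for e using wp_sub[OF \<rho>] by (auto simp: rowv_def)
  have DR: "Dxy \<inter> R = {}" using Dd Rd by auto
  show "is_pairing (rowv V l) ?P"
    unfolding is_pairing_def
  proof (rule conjI)
    show "\<forall>e \<in> ?P. card e = 2 \<and> e \<subseteq> rowv V l"
    proof
      fix e assume e: "e \<in> ?P"
      show "card e = 2 \<and> e \<subseteq> rowv V l"
      proof (cases "e \<in> \<sigma> l")
        case True then show ?thesis using wp_elem_ex[OF \<sigma> True] wp_sub[OF \<sigma> True] DV by auto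
      next
        case F1: False
        show ?thesis
        proof (cases "e \<in> \<rho> l")
          case True then show ?thesis using wp_elem_ex[OF \<rho> True] wp_sub[OF \<rho> True] DV by auto
        next
          case False then have "l = L" "e = {x,y}" using e F1 by (auto split: if_splits)
          then show ?thesis using xy xyV by auto
        qed
      qed
    qed
  next
    show "\<forall>z \<in> rowv V l. \<exists>!e. e \<in> ?P \<and> z \<in> e"
    proof
      fix z assume z: "z \<in> rowv V l"
      then have zl: "z \<in> V" "length z = l" by (auto simp: rowv_def)
      show "\<exists>!e. e \<in> ?P \<and> z \<in> e"
      proof (cases "z \<in> Dxy")
        case True
        then have l1: "l \<ge> Suc L" using Dd zl by auto
        have zD: "z \<in> rowv Dxy l" using True zl by (simp add: rowv_def)
        obtain e where e: "e \<in> \<sigma> l" "z \<in> e"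
          using wp_pairing[OF \<sigma> l1] zD unfolding is_pairing_def by blast
        show ?thesis
        proof (intro ex1I[of _ e])
          show "e \<in> ?P \<and> z \<in> e" using e by auto
        next
          fix e' assume e': "e' \<in> ?P \<and> z \<in> e'"
          show "e' = e"
          proof (cases "e' \<in> \<sigma> l")
            case True then show ?thesis using pairing_uniq[OF wp_pairing[OF \<sigma> l1] True e(1)] e e' by blast
          next
            case False
            then have "e' \<in> \<rho> l" using e' l1 by (auto split: if_splits)
            then show ?thesis using rR e' True DR by blast
          qed
        qed
      next
        case nD: False
        show ?thesis
        proof (cases "z \<in> R")
          case True
          have zR: "z \<in> rowv R l" using True zl by (simp add: rowv_def)
          obtain e where e: "e \<in> \<rho> l" "z \<in> e"
            using wp_pairing[OF \<rho> l] zR unfolding is_pairing_def by blast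
          show ?thesis
          proof (intro ex1I[of _ e])
            show "e \<in> ?P \<and> z \<in> e" using e by auto
          next
            fix e' assume e': "e' \<in> ?P \<and> z \<in> e'"
            show "e' = e"
            proof (cases "e' \<in> \<rho> l")
              case True then show ?thesis using pairing_uniq[OF wp_pairing[OF \<rho> l] True e(1)] e e' by blast
            next
              case False
              then have "e' \<in> \<sigma> l \<or> (l = L \<and> e' = {x,y})" using e' by (auto split: if_splits)
              then show ?thesis
              proof
                assume "e' \<in> \<sigma> l" then show ?thesis using sD e' nD by blast
              next
                assume h: "l = L \<and> e' = {x,y}"
                then have "z \<in> {x,y}" using e' by simp
                moreover have "take L z = z" using zl h by simp
                ultimately show ?thesis using True Rd by auto
              qed
            qed
          qed
        next
          case nR: False
          have "take L z \<in> {x,y}" using nR Rd zl by auto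
          then have lL: "l = L" and zxy: "z \<in> {x,y}" using nD Dd zl lenV by (auto simp: not_less)
          show ?thesis
          proof (intro ex1I[of _ "{x,y}"])
            show "{x,y} \<in> ?P \<and> z \<in> {x,y}" using lL zxy by simp
          next
            fix e' assume e': "e' \<in> ?P \<and> z \<in> e'"
            have "e' \<notin> \<sigma> l" using sD e' nD by blast
            moreover have "e' \<notin> \<rho> l" using rR e' nR by blast
            ultimately show "e' = {x,y}" using e' by (auto split: if_splits)
          qed
        qed
      qed
    qed
  qed
next
  fix l :: nat and v v' assume l: "L < l"
    and vv: "{v, v'} \<in> \<sigma> l \<union> \<rho> l \<union> (if l = L then {{x,y}} else {})"
  let ?P = "\<lambda>l. \<sigma> l \<union> \<rho> l \<union> (if l = L then {{x,y}} else {})"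
  show "butlast v = butlast v' \<or> {butlast v, butlast v'} \<in> ?P (l - 1)"
  proof (cases "{v,v'} \<in> \<sigma> l")
    case True
    show ?thesis
    proof (cases "l = Suc L")
      case False
      then have "Suc L < l" using l by simp
      then show ?thesis using wp_par[OF \<sigma> _ True] by auto
    next
      case lS: True
      have "v \<in> Dxy" "v' \<in> Dxy" "length v = l" "length v' = l" using wp_elem_len[OF \<sigma> True] by auto
      then have "butlast v \<in> {x,y}" "butlast v' \<in> {x,y}" using Dd lS
        by (auto simp: butlast_conv_take)
      then show ?thesis using lS by auto
    qed
  next
    case False
    then have "{v,v'} \<in> \<rho> l" using vv l by (auto split: if_splits)
    then show ?thesis using wp_par[OF \<rho> l] by auto
  qed
qed

lemma wp_split_card:
  assumes x: "x \<in> rowv V L" and y: "y \<in> rowv V L" and xy: "x \<noteq> y"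
    and lenV: "\<forall>v\<in>V. length v \<ge> L"
    and Dd: "Dxy = {v\<in>V. length v > L \<and> take L v \<in> {x,y}}"
    and Rd: "R = {v\<in>V. take L v \<notin> {x,y}}"
  shows "card {\<pi>\<in>wpset V L. {x,y} \<in> \<pi> L} = card (wpset Dxy (Suc L)) * card (wpset R L)"
proof -
  let ?Phi = "\<lambda>\<pi>. ((\<lambda>l. {e\<in>\<pi> l. e \<subseteq> Dxy}), (\<lambda>l. {e\<in>\<pi> l. e \<subseteq> R}))"
  let ?Psi = "\<lambda>(\<sigma>,\<rho>). (\<lambda>l. \<sigma> l \<union> \<rho> l \<union> (if l = L then {{x,y}} else {}))"
  have DR: "Dxy \<inter> R = {}" using Dd Rd by auto
  have "bij_betw ?Phi {\<pi>\<in>wpset V L. {x,y} \<in> \<pi> L} (wpset Dxy (Suc L) \<times> wpset R L)"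
  proof (rule bij_betw_byWitness[where f'="?Psi"])
    show "\<forall>\<pi>\<in>{\<pi> \<in> wpset V L. {x, y} \<in> \<pi> L}. ?Psi (?Phi \<pi>) = \<pi>"
    proof
      fix \<pi> assume "\<pi> \<in> {\<pi> \<in> wpset V L. {x, y} \<in> \<pi> L}"
      then have \<pi>: "\<pi> \<in> wpset V L" and xy\<pi>: "{x, y} \<in> \<pi> L" by auto
      have "\<pi> l = {e\<in>\<pi> l. e \<subseteq> Dxy} \<union> {e\<in>\<pi> l. e \<subseteq> R} \<union> (if l = L then {{x,y}} else {})" for l
      proof
        show "\<pi> l \<subseteq> {e\<in>\<pi> l. e \<subseteq> Dxy} \<union> {e\<in>\<pi> l. e \<subseteq> R} \<union> (if l = L then {{x,y}} else {})"
        proof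
          fix e assume e: "e \<in> \<pi> l"
          then have lL: "l \<ge> L" using wp_low[OF \<pi>] by (metis empty_iff not_le)
          obtain a b where ab: "e = {a,b}" "a \<noteq> b" using wp_elem_ex[OF \<pi> e] by blast
          have len: "a \<in> V" "length a = l" "b \<in> V" "length b = l" using wp_elem_len[OF \<pi>] e ab by auto
          have ba: "{b,a} \<in> \<pi> l" using e ab by (simp add: insert_commute)
          show "e \<in> {e\<in>\<pi> l. e \<subseteq> Dxy} \<union> {e\<in>\<pi> l. e \<subseteq> R} \<union> (if l = L then {{x,y}} else {})"
          proof (cases "take L a \<in> {x,y}")
            case True
            then have tb: "take L b \<in> {x,y}" using wp_blk[OF \<pi> xy\<pi> lL] e ab by blast
            show ?thesis
            proof (cases "l = L")
              case True
              then have "a \<in> {x,y}" "b \<in> {x,y}" using \<open>take L a \<in> {x,y}\<close> tb len by auto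
              then have "e = {x,y}" using ab xy by auto
              then show ?thesis using True by simp
            next
              case False
              then have "e \<subseteq> Dxy" using Dd len ab \<open>take L a \<in> {x,y}\<close> tb lL by auto
              then show ?thesis using e by simp
            qed
          next
            case False
            then have "take L b \<notin> {x,y}" using wp_blk[OF \<pi> xy\<pi> lL ba] by blast
            then have "e \<subseteq> R" using Rd len ab False by auto
            then show ?thesis using e by simp
          qed
        qed
      next
        show "{e\<in>\<pi> l. e \<subseteq> Dxy} \<union> {e\<in>\<pi> l. e \<subseteq> R} \<union> (if l = L then {{x,y}} else {}) \<subseteq> \<pi> l"
          using xy\<pi> by auto
      qed
      then show "?Psi (?Phi \<pi>) = \<pi>" by auto
    qed
  next
    show "\<forall>p\<in>wpset Dxy (Suc L) \<times> wpset R L. ?Phi (?Psi p) = p"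
    proof
      fix p assume "p \<in> wpset Dxy (Suc L) \<times> wpset R L"
      then obtain \<sigma> \<rho> where p: "p = (\<sigma>, \<rho>)" and \<sigma>: "\<sigma> \<in> wpset Dxy (Suc L)" and \<rho>: "\<rho> \<in> wpset R L" by auto
      have sD: "e \<in> \<sigma> l \<Longrightarrow> e \<subseteq> Dxy" for e l using wp_sub[OF \<sigma>] by (auto simp: rowv_def)
      have rR: "e \<in> \<rho> l \<Longrightarrow> e \<subseteq> R" for e l using wp_sub[OF \<rho>] by (auto simp: rowv_def)
      have sne: "e \<in> \<sigma> l \<Longrightarrow> e \<noteq> {}" for e l using wp_elem_ex[OF \<sigma>] by blast
      have rne: "e \<in> \<rho> l \<Longrightarrow> e \<noteq> {}" for e l using wp_elem_ex[OF \<rho>] by blast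
      have xnD: "\<not> {x,y} \<subseteq> Dxy" using x Dd by (auto simp: rowv_def)
      have xnR: "\<not> {x,y} \<subseteq> R" using x Rd by (auto simp: rowv_def)
      have 1: "{e \<in> \<sigma> l \<union> \<rho> l \<union> (if l = L then {{x,y}} else {}). e \<subseteq> Dxy} = \<sigma> l" for l
      proof (intro equalityI subsetI)
        fix e assume e: "e \<in> {e \<in> \<sigma> l \<union> \<rho> l \<union> (if l = L then {{x,y}} else {}). e \<subseteq> Dxy}"
        show "e \<in> \<sigma> l"
        proof (rule ccontr)
          assume "e \<notin> \<sigma> l"
          then have "e \<in> \<rho> l \<or> e = {x,y}" using e by (auto split: if_splits)
          then show False
          proof
            assume "e \<in> \<rho> l" then have "e \<subseteq> Dxy \<inter> R" "e \<noteq> {}" using rR rne e by auto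
            then show False using DR by blast
          next
            assume "e = {x,y}" then show False using xnD e by blast
          qed
        qed
      next
        fix e assume "e \<in> \<sigma> l" then show "e \<in> {e \<in> \<sigma> l \<union> \<rho> l \<union> (if l = L then {{x,y}} else {}). e \<subseteq> Dxy}"
          using sD by blast
      qed
      have 2: "{e \<in> \<sigma> l \<union> \<rho> l \<union> (if l = L then {{x,y}} else {}). e \<subseteq> R} = \<rho> l" for l
      proof (intro equalityI subsetI)
        fix e assume e: "e \<in> {e \<in> \<sigma> l \<union> \<rho> l \<union> (if l = L then {{x,y}} else {}). e \<subseteq> R}"
        show "e \<in> \<rho> l"
        proof (rule ccontr)
          assume "e \<notin> \<rho> l"
          then have "e \<in> \<sigma> l \<or> e = {x,y}" using e by (auto split: if_splits)
          then show False
          proof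
            assume "e \<in> \<sigma> l" then have "e \<subseteq> Dxy \<inter> R" "e \<noteq> {}" using sD sne e by auto
            then show False using DR by blast
          next
            assume "e = {x,y}" then show False using xnR e by blast
          qed
        qed
      next
        fix e assume "e \<in> \<rho> l" then show "e \<in> {e \<in> \<sigma> l \<union> \<rho> l \<union> (if l = L then {{x,y}} else {}). e \<subseteq> R}"
          using rR by blast
      qed
      show "?Phi (?Psi p) = p" using 1 2 p by auto
    qed
  next
    show "?Phi ` {\<pi> \<in> wpset V L. {x, y} \<in> \<pi> L} \<subseteq> wpset Dxy (Suc L) \<times> wpset R L"
      using wpD[OF _ _ Dd] wpR[OF _ _ Rd] by auto
  next
    show "?Psi ` (wpset Dxy (Suc L) \<times> wpset R L) \<subseteq> {\<pi> \<in> wpset V L. {x, y} \<in> \<pi> L}"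
      using wpPsi[OF _ _ x y xy lenV Dd Rd] by auto
  qed
  then show ?thesis by (simp add: bij_betw_same_card card_cartesian_product)
qed


lemma wp_row_empty: "\<pi> \<in> wpset V L \<Longrightarrow> rowv V l = {} \<Longrightarrow> \<pi> l = {}"
proof (rule ccontr)
  assume a: "\<pi> \<in> wpset V L" "rowv V l = {}" "\<pi> l \<noteq> {}"
  then obtain e where e: "e \<in> \<pi> l" by blast
  obtain p q where "e = {p,q}" using wp_elem_ex[OF a(1) e] by blast
  then show False using wp_sub[OF a(1) e] a(2) by blast
qed

lemma wp_finite:
  assumes "finite V"
  shows "finite (wpset V L)"
proof -
  define N where "N = Max (insert 0 (length ` V))"
  have rN: "l > N \<Longrightarrow> rowv V l = {}" for l
    using assms unfolding N_def rowv_def by (auto dest: Max_ge[of "insert 0 (length ` V)"])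
  have "wpset V L \<subseteq> {f. \<forall>l. (l \<in> {..N} \<longrightarrow> f l \<in> Pow (Pow V)) \<and> (l \<notin> {..N} \<longrightarrow> f l = {})}"
  proof (intro subsetI CollectI allI conjI impI)
    fix \<pi> l assume \<pi>: "\<pi> \<in> wpset V L"
    show "\<pi> l \<in> Pow (Pow V)" using wp_sub[OF \<pi>] by (auto simp: rowv_def)
    assume "l \<notin> {..N}"
    then have "rowv V l = {}" using rN by simp
    then show "\<pi> l = {}" using wp_row_empty[OF \<pi>] by blast
  qed
  moreover have "finite {f. \<forall>l. (l \<in> {..N} \<longrightarrow> f l \<in> Pow (Pow V)) \<and> (l \<notin> {..N} \<longrightarrow> f l = {})}"
    by (rule finite_set_of_finite_funs) (use assms in auto)
  ultimately show ?thesis by (rule finite_subset)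
qed


lemma wp_empty: "wpset {} L = {\<lambda>_. {}}"
proof
  show "wpset {} L \<subseteq> {\<lambda>_. {}}"
  proof
    fix \<pi> assume \<pi>: "\<pi> \<in> wpset {} L"
    have "\<pi> l = {}" for l using wp_row_empty[OF \<pi>] by (auto simp: rowv_def)
    then show "\<pi> \<in> {\<lambda>_. {}}" by auto
  qed
next
  show "{\<lambda>_. {}} \<subseteq> wpset {} L" by (auto simp: wpset_def rowv_def is_pairing_def)
qed


lemma wp_rec:
  assumes fin: "finite V" and x: "x \<in> rowv V L" and lenV: "\<forall>v\<in>V. length v \<ge> L"
  shows "card (wpset V L) = (\<Sum>y\<in>rowv V L - {x}.
     card (wpset {v\<in>V. length v > L \<and> take L v \<in> {x,y}} (Suc L)) * card (wpset {v\<in>V. take L v \<notin> {x,y}} L))"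
proof -
  have eq: "wpset V L = (\<Union>y\<in>rowv V L - {x}. {\<pi>\<in>wpset V L. {x,y} \<in> \<pi> L})"
  proof
    show "wpset V L \<subseteq> (\<Union>y\<in>rowv V L - {x}. {\<pi>\<in>wpset V L. {x,y} \<in> \<pi> L})"
    proof
      fix \<pi> assume \<pi>: "\<pi> \<in> wpset V L"
      obtain y where y: "y \<noteq> x" "{x,y} \<in> \<pi> L" using pairing_ex[OF wp_pairing[OF \<pi> order_refl] x] by blast
      have "y \<in> rowv V L" using wp_sub[OF \<pi> y(2)] by auto
      then show "\<pi> \<in> (\<Union>y\<in>rowv V L - {x}. {\<pi>\<in>wpset V L. {x,y} \<in> \<pi> L})" using y \<pi> by auto
    qed
  next
    show "(\<Union>y\<in>rowv V L - {x}. {\<pi>\<in>wpset V L. {x,y} \<in> \<pi> L}) \<subseteq> wpset V L" by blast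
  qed
  have fr: "finite (rowv V L)" using fin by (simp add: rowv_def)
  have "card (\<Union>y\<in>rowv V L - {x}. {\<pi>\<in>wpset V L. {x,y} \<in> \<pi> L}) = (\<Sum>y\<in>rowv V L - {x}. card {\<pi>\<in>wpset V L. {x,y} \<in> \<pi> L})"
  proof (rule card_UN_disjoint)
    show "finite (rowv V L - {x})" using fr by simp
    show "\<forall>i\<in>rowv V L - {x}. finite {\<pi> \<in> wpset V L. {x, i} \<in> \<pi> L}" using wp_finite[OF fin] by simp
    show "\<forall>i\<in>rowv V L - {x}. \<forall>j\<in>rowv V L - {x}. i \<noteq> j \<longrightarrow>
        {\<pi> \<in> wpset V L. {x, i} \<in> \<pi> L} \<inter> {\<pi> \<in> wpset V L. {x, j} \<in> \<pi> L} = {}"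
    proof (intro ballI impI)
      fix i j assume ij: "i \<in> rowv V L - {x}" "j \<in> rowv V L - {x}" "i \<noteq> j"
      show "{\<pi> \<in> wpset V L. {x, i} \<in> \<pi> L} \<inter> {\<pi> \<in> wpset V L. {x, j} \<in> \<pi> L} = {}"
      proof (rule ccontr)
        assume "{\<pi> \<in> wpset V L. {x, i} \<in> \<pi> L} \<inter> {\<pi> \<in> wpset V L. {x, j} \<in> \<pi> L} \<noteq> {}"
        then obtain \<pi> where \<pi>: "\<pi> \<in> wpset V L" "{x, i} \<in> \<pi> L" "{x, j} \<in> \<pi> L" by blast
        have "{x,i} = {x,j}" using pairing_uniq[OF wp_pairing[OF \<pi>(1) order_refl] \<pi>(2) \<pi>(3), of x] by simp
        then show False using ij by (auto simp: doubleton_eq_iff)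
      qed
    qed
  qed
  then have "card (wpset V L) = (\<Sum>y\<in>rowv V L - {x}. card {\<pi>\<in>wpset V L. {x,y} \<in> \<pi> L})"
    using eq by simp
  also have "\<dots> = (\<Sum>y\<in>rowv V L - {x}.
     card (wpset {v\<in>V. length v > L \<and> take L v \<in> {x,y}} (Suc L)) * card (wpset {v\<in>V. take L v \<notin> {x,y}} L))"
  proof (rule sum.cong[OF refl])
    fix y assume y: "y \<in> rowv V L - {x}"
    show "card {\<pi>\<in>wpset V L. {x,y} \<in> \<pi> L} =
      card (wpset {v\<in>V. length v > L \<and> take L v \<in> {x,y}} (Suc L)) * card (wpset {v\<in>V. take L v \<notin> {x,y}} L)"
      using wp_split_card[OF x _ _ lenV refl refl, of y] y by (metis DiffD1 DiffD2 singletonI)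
  qed
  finally show ?thesis .
qed


definition fv :: "nat list set \<Rightarrow> (nat list \<Rightarrow> otree) \<Rightarrow> nat list set" where
  "fv Q T = {q @ p | q p. q \<in> Q \<and> p \<in> positions (T q)}"

lemma nil_pos: "[] \<in> positions t"
  by (cases t) simp

lemma finite_pos: "finite (positions t)"
  by (induction t rule: positions.induct) auto

lemma pos_child: "k < length (children t) \<Longrightarrow> p \<in> positions (children t ! k) \<Longrightarrow> k # p \<in> positions t"
  by (cases t) auto

lemma pos_cons: "p \<in> positions t \<Longrightarrow> p \<noteq> [] \<Longrightarrow>
   \<exists>k p'. p = k # p' \<and> k < length (children t) \<and> p' \<in> positions (children t ! k)"
  by (cases t) auto

lemma fv_alt: "fv Q T = (\<Union>q\<in>Q. (\<lambda>p. q @ p) ` positions (T q))" unfolding fv_def by auto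

lemma fv_finite: "finite Q \<Longrightarrow> finite (fv Q T)"
  unfolding fv_alt using finite_pos by simp

lemma fv_len: "\<forall>q\<in>Q. length q = L \<Longrightarrow> \<forall>v\<in>fv Q T. length v \<ge> L"
  unfolding fv_alt by auto

lemma fv_row: "\<forall>q\<in>Q. length q = L \<Longrightarrow> rowv (fv Q T) L = Q"
proof
  assume h: "\<forall>q\<in>Q. length q = L"
  show "rowv (fv Q T) L \<subseteq> Q"
  proof
    fix v assume "v \<in> rowv (fv Q T) L"
    then obtain q p where "q \<in> Q" "v = q @ p" "length v = L" unfolding rowv_def fv_alt by blast
    then show "v \<in> Q" using h by auto
  qed
  show "Q \<subseteq> rowv (fv Q T) L"
  proof
    fix q assume q: "q \<in> Q"
    have "q @ [] \<in> fv Q T" unfolding fv_alt using q nil_pos by blast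
    then show "q \<in> rowv (fv Q T) L" using q h unfolding rowv_def by simp
  qed
qed

lemma fv_cong: "(\<And>q. q \<in> Q \<Longrightarrow> T q = T' q) \<Longrightarrow> fv Q T = fv Q T'"
  unfolding fv_alt by simp


lemma fv_R: "\<forall>q\<in>Q. length q = L \<Longrightarrow> {v \<in> fv Q T. take L v \<notin> B} = fv (Q - B) T"
proof -
  assume h: "\<forall>q\<in>Q. length q = L"
  have "take L (q @ p) = q" if "q \<in> Q" for q p using h that by simp
  then show ?thesis unfolding fv_alt
  proof (intro equalityI subsetI)
    fix v assume t: "\<And>q p. q \<in> Q \<Longrightarrow> take L (q @ p) = q"
      and v: "v \<in> {v \<in> \<Union>q\<in>Q. (@) q ` positions (T q). take L v \<notin> B}"
    then obtain q p where "q \<in> Q" "p \<in> positions (T q)" "v = q @ p" "take L v \<notin> B" by blast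
    then show "v \<in> (\<Union>q\<in>Q - B. (@) q ` positions (T q))" using t by auto
  next
    fix v assume t: "\<And>q p. q \<in> Q \<Longrightarrow> take L (q @ p) = q"
      and v: "v \<in> (\<Union>q\<in>Q - B. (@) q ` positions (T q))"
    then obtain q p where "q \<in> Q - B" "p \<in> positions (T q)" "v = q @ p" by blast
    then show "v \<in> {v \<in> \<Union>q\<in>Q. (@) q ` positions (T q). take L v \<notin> B}" using t by auto
  qed
qed


definition Qc :: "nat list set \<Rightarrow> (nat list \<Rightarrow> otree) \<Rightarrow> nat list set" where
  "Qc B T = {q @ [k] | q k. q \<in> B \<and> k < length (children (T q))}"

definition Tc :: "nat \<Rightarrow> (nat list \<Rightarrow> otree) \<Rightarrow> nat list \<Rightarrow> otree" where
  "Tc L T q = children (T (take L q)) ! (q ! L)"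

lemma fv_D:
  assumes "\<forall>q\<in>Q. length q = L" "B \<subseteq> Q"
  shows "{v \<in> fv Q T. length v > L \<and> take L v \<in> B} = fv (Qc B T) (Tc L T)"
proof
  show "{v \<in> fv Q T. length v > L \<and> take L v \<in> B} \<subseteq> fv (Qc B T) (Tc L T)"
  proof
    fix v assume "v \<in> {v \<in> fv Q T. length v > L \<and> take L v \<in> B}"
    then obtain q p where v: "v = q @ p" "q \<in> Q" "p \<in> positions (T q)" "length v > L" "take L v \<in> B"
      unfolding fv_def by blast
    have lq: "length q = L" using assms v by auto
    then have "p \<noteq> []" using v by auto
    then obtain k p' where kp: "p = k # p'" "k < length (children (T q))" "p' \<in> positions (children (T q) ! k)"
      using pos_cons[OF v(3)] by blast
    have qB: "q \<in> B" using v lq by simp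
    have "Tc L T (q @ [k]) = children (T q) ! k" unfolding Tc_def using lq by (simp add: nth_append)
    then show "v \<in> fv (Qc B T) (Tc L T)"
      unfolding fv_def Qc_def using kp qB v(1)
      by (intro CollectI exI[of _ "q @ [k]"] exI[of _ p']) auto
  qed
next
  show "fv (Qc B T) (Tc L T) \<subseteq> {v \<in> fv Q T. length v > L \<and> take L v \<in> B}"
  proof
    fix v assume "v \<in> fv (Qc B T) (Tc L T)"
    then obtain q k p' where v: "v = (q @ [k]) @ p'" "q \<in> B" "k < length (children (T q))"
       "p' \<in> positions (Tc L T (q @ [k]))"
      unfolding fv_def Qc_def by blast
    have lq: "length q = L" using assms v by auto
    have "Tc L T (q @ [k]) = children (T q) ! k" unfolding Tc_def using lq by (simp add: nth_append)
    then have "k # p' \<in> positions (T q)" using pos_child v by auto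
    then show "v \<in> {v \<in> fv Q T. length v > L \<and> take L v \<in> B}"
      unfolding fv_alt using v lq assms(2) by auto
  qed
qed




lemma sum_PiE_split:
  fixes f g :: "(nat list \<Rightarrow> 'a) \<Rightarrow> real"
  assumes fin: "finite B" "finite C" and dis: "B \<inter> C = {}"
    and fc: "\<And>T T'. (\<And>q. q \<in> B \<Longrightarrow> T q = T' q) \<Longrightarrow> f T = f T'"
    and gc: "\<And>T T'. (\<And>q. q \<in> C \<Longrightarrow> T q = T' q) \<Longrightarrow> g T = g T'"
  shows "(\<Sum>T\<in>PiE (B \<union> C) (\<lambda>_. A). f T * g T) = (\<Sum>T\<in>PiE B (\<lambda>_. A). f T) * (\<Sum>T\<in>PiE C (\<lambda>_. A). g T)"
proof -
  let ?h = "\<lambda>(S,U). (\<lambda>q. if q \<in> B then S q else U q)"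
  have bij: "bij_betw ?h (PiE B (\<lambda>_. A) \<times> PiE C (\<lambda>_. A)) (PiE (B \<union> C) (\<lambda>_. A))"
  proof (rule bij_betw_byWitness[where f'="\<lambda>T. (restrict T B, restrict T C)"])
    show "\<forall>a\<in>PiE B (\<lambda>_. A) \<times> PiE C (\<lambda>_. A). (\<lambda>T. (restrict T B, restrict T C)) (?h a) = a"
    proof
      fix a assume "a \<in> PiE B (\<lambda>_. A) \<times> PiE C (\<lambda>_. A)"
      then obtain S U where a: "a = (S,U)" "S \<in> PiE B (\<lambda>_. A)" "U \<in> PiE C (\<lambda>_. A)" by blast
      have "restrict (?h a) B = S"
      proof
        fix q show "restrict (?h a) B q = S q" using a PiE_arb[OF a(2), of q] by auto
      qed
      moreover have "restrict (?h a) C = U"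
      proof
        fix q show "restrict (?h a) C q = U q" using a dis PiE_arb[OF a(3), of q] by auto
      qed
      ultimately show "(\<lambda>T. (restrict T B, restrict T C)) (?h a) = a" using a by simp
    qed
    show "\<forall>a'\<in>PiE (B \<union> C) (\<lambda>_. A). ?h ((\<lambda>T. (restrict T B, restrict T C)) a') = a'"
    proof
      fix T assume T: "T \<in> PiE (B \<union> C) (\<lambda>_. A)"
      show "?h ((\<lambda>T. (restrict T B, restrict T C)) T) = T"
      proof
        fix q show "?h ((\<lambda>T. (restrict T B, restrict T C)) T) q = T q"
          using PiE_arb[OF T, of q] by (cases "q \<in> B"; cases "q \<in> C") auto
      qed
    qed
    show "?h ` (PiE B (\<lambda>_. A) \<times> PiE C (\<lambda>_. A)) \<subseteq> PiE (B \<union> C) (\<lambda>_. A)"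
    proof (rule image_subsetI)
      fix p assume "p \<in> PiE B (\<lambda>_. A) \<times> PiE C (\<lambda>_. A)"
      then obtain S U where p: "p = (S,U)" "S \<in> PiE B (\<lambda>_. A)" "U \<in> PiE C (\<lambda>_. A)" by blast
      show "?h p \<in> PiE (B \<union> C) (\<lambda>_. A)"
        unfolding PiE_iff extensional_def
      proof (intro conjI ballI allI impI CollectI)
        fix q assume "q \<in> B \<union> C" then show "?h p q \<in> A" using p PiE_mem by fastforce
      next
        fix q assume "q \<notin> B \<union> C" then show "?h p q = undefined" using p PiE_arb by fastforce
      qed
    qed
    show "(\<lambda>T. (restrict T B, restrict T C)) ` PiE (B \<union> C) (\<lambda>_. A) \<subseteq> PiE B (\<lambda>_. A) \<times> PiE C (\<lambda>_. A)"
      by auto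
  qed
  have "(\<Sum>T\<in>PiE B (\<lambda>_. A). f T) * (\<Sum>T\<in>PiE C (\<lambda>_. A). g T) =
      (\<Sum>p\<in>PiE B (\<lambda>_. A) \<times> PiE C (\<lambda>_. A). f (fst p) * g (snd p))"
    by (simp add: sum_product sum.cartesian_product split_beta)
  also have "\<dots> = (\<Sum>p\<in>PiE B (\<lambda>_. A) \<times> PiE C (\<lambda>_. A). f (?h p) * g (?h p))"
  proof (rule sum.cong[OF refl])
    fix p assume "p \<in> PiE B (\<lambda>_. A) \<times> PiE C (\<lambda>_. A)"
    obtain S U where p: "p = (S,U)" by force
    have "f S = f (?h p)" using p by (intro fc) auto
    moreover have "g U = g (?h p)" using p dis by (intro gc) auto
    ultimately show "f (fst p) * g (snd p) = f (?h p) * g (?h p)" using p by simp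
  qed
  also have "\<dots> = (\<Sum>T\<in>PiE (B \<union> C) (\<lambda>_. A). f T * g T)"
    using sum.reindex_bij_betw[OF bij, of "\<lambda>T. f T * g T"] by simp
  finally show ?thesis by simp
qed



definition Av :: "nat \<Rightarrow> nat \<Rightarrow> otree set" where
  "Av D s = {T. valid D s T}"

definition wt :: "(nat \<Rightarrow> nat \<Rightarrow> real) \<Rightarrow> real \<Rightarrow> nat \<Rightarrow> otree \<Rightarrow> real" where
  "wt c tau0 s T = subweight c s T * tau0 ^ level0 s T"

definition Gs :: "(nat \<Rightarrow> nat \<Rightarrow> real) \<Rightarrow> nat \<Rightarrow> real \<Rightarrow> nat \<Rightarrow> nat \<Rightarrow> nat list set \<Rightarrow> real" where
  "Gs c D tau0 s L Q = (\<Sum>T\<in>PiE Q (\<lambda>_. Av D s). real (card (wpset (fv Q T) L)) * (\<Prod>q\<in>Q. wt c tau0 s (T q)))"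

definition Kx :: "(nat \<Rightarrow> nat \<Rightarrow> real) \<Rightarrow> nat \<Rightarrow> real \<Rightarrow> nat \<Rightarrow> nat \<Rightarrow> nat list \<Rightarrow> nat list \<Rightarrow> real" where
  "Kx c D tau0 s L x y = (\<Sum>T\<in>PiE {x,y} (\<lambda>_. Av D s).
     real (card (wpset (fv (Qc {x,y} T) (Tc L T)) (Suc L))) * wt c tau0 s (T x) * wt c tau0 s (T y))"

lemma Qc_cong: "(\<And>q. q \<in> B \<Longrightarrow> T q = T' q) \<Longrightarrow> Qc B T = Qc B T'"
  unfolding Qc_def by (intro Collect_cong) (metis)

lemma fvQc_cong:
  assumes "\<forall>q\<in>B. length q = L" "\<And>q. q \<in> B \<Longrightarrow> T q = T' q"
  shows "fv (Qc B T) (Tc L T) = fv (Qc B T') (Tc L T')"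
proof -
  have 1: "Qc B T = Qc B T'" using Qc_cong assms(2) by blast
  have "Tc L T q = Tc L T' q" if qq: "q \<in> Qc B T" for q
  proof -
    obtain q0 k where "q = q0 @ [k]" "q0 \<in> B" using qq unfolding Qc_def by blast
    then have "take L q \<in> B" using assms(1) by simp
    then show ?thesis unfolding Tc_def using assms(2) by simp
  qed
  then show ?thesis using 1 fv_cong[of "Qc B T" "Tc L T" "Tc L T'"] by simp
qed

lemma G_rec:
  assumes fin: "finite Q" and len: "\<forall>q\<in>Q. length q = L" and x: "x \<in> Q"
  shows "Gs c D tau0 s L Q = (\<Sum>y\<in>Q - {x}. Kx c D tau0 s L x y * Gs c D tau0 s L (Q - {x,y}))"
proof -
  let ?A = "Av D s"
  let ?w = "wt c tau0 s"
  define a where "a y T = real (card (wpset (fv (Qc {x,y} T) (Tc L T)) (Suc L))) * ?w (T x) * ?w (T y)" for y T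
  define b where "b y T = real (card (wpset (fv (Q - {x,y}) T) L)) * (\<Prod>q\<in>Q - {x,y}. ?w (T q))" for y T
  have step: "real (card (wpset (fv Q T) L)) * (\<Prod>q\<in>Q. ?w (T q)) = (\<Sum>y\<in>Q - {x}. a y T * b y T)" for T
  proof -
    have V: "finite (fv Q T)" using fv_finite[OF fin] .
    have r: "rowv (fv Q T) L = Q" using fv_row[OF len] .
    have "card (wpset (fv Q T) L) = (\<Sum>y\<in>Q - {x}.
       card (wpset (fv (Qc {x,y} T) (Tc L T)) (Suc L)) * card (wpset (fv (Q - {x,y}) T) L))"
    proof -
      have "card (wpset (fv Q T) L) = (\<Sum>y\<in>rowv (fv Q T) L - {x}.
        card (wpset {v\<in>fv Q T. length v > L \<and> take L v \<in> {x,y}} (Suc L)) * card (wpset {v\<in>fv Q T. take L v \<notin> {x,y}} L))"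
        by (rule wp_rec[OF V]) (use r x fv_len[OF len] in auto)
      also have "\<dots> = (\<Sum>y\<in>Q - {x}.
       card (wpset (fv (Qc {x,y} T) (Tc L T)) (Suc L)) * card (wpset (fv (Q - {x,y}) T) L))"
      proof (rule sum.cong)
        show "rowv (fv Q T) L - {x} = Q - {x}" using r by simp
      next
        fix y assume y: "y \<in> Q - {x}"
        have "{x,y} \<subseteq> Q" using x y by auto
        then show "card (wpset {v\<in>fv Q T. length v > L \<and> take L v \<in> {x,y}} (Suc L)) * card (wpset {v\<in>fv Q T. take L v \<notin> {x,y}} L) =
          card (wpset (fv (Qc {x,y} T) (Tc L T)) (Suc L)) * card (wpset (fv (Q - {x,y}) T) L)"
          using fv_D[OF len, of "{x,y}" T] fv_R[OF len, of T "{x,y}"] by simp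
      qed
      finally show ?thesis .
    qed
    then have c1: "real (card (wpset (fv Q T) L)) = (\<Sum>y\<in>Q - {x}.
       real (card (wpset (fv (Qc {x,y} T) (Tc L T)) (Suc L))) * real (card (wpset (fv (Q - {x,y}) T) L)))"
      by (simp add: of_nat_sum)
    have c2: "(\<Prod>q\<in>Q. ?w (T q)) = ?w (T x) * ?w (T y) * (\<Prod>q\<in>Q - {x,y}. ?w (T q))" if y: "y \<in> Q - {x}" for y
    proof -
      have "(\<Prod>q\<in>Q. ?w (T q)) = ?w (T x) * (\<Prod>q\<in>Q - {x}. ?w (T q))"
        using prod.remove[OF fin x] by simp
      also have "(\<Prod>q\<in>Q - {x}. ?w (T q)) = ?w (T y) * (\<Prod>q\<in>Q - {x} - {y}. ?w (T q))"
        using prod.remove[of "Q - {x}" y] fin y by simp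
      also have "Q - {x} - {y} = Q - {x,y}" by auto
      finally show ?thesis by (simp add: mult.assoc)
    qed
    have "real (card (wpset (fv Q T) L)) * (\<Prod>q\<in>Q. ?w (T q)) = (\<Sum>y\<in>Q - {x}.
       real (card (wpset (fv (Qc {x,y} T) (Tc L T)) (Suc L))) * real (card (wpset (fv (Q - {x,y}) T) L)) * (\<Prod>q\<in>Q. ?w (T q)))"
      unfolding c1 by (simp add: sum_distrib_right)
    also have "\<dots> = (\<Sum>y\<in>Q - {x}. a y T * b y T)"
    proof (rule sum.cong[OF refl])
      fix y assume "y \<in> Q - {x}"
      then show "real (card (wpset (fv (Qc {x,y} T) (Tc L T)) (Suc L))) * real (card (wpset (fv (Q - {x,y}) T) L)) * (\<Prod>q\<in>Q. ?w (T q)) = a y T * b y T"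
        unfolding a_def b_def c2[OF \<open>y \<in> Q - {x}\<close>] by (simp add: mult_ac)
    qed
    finally show ?thesis .
  qed
  have "Gs c D tau0 s L Q = (\<Sum>T\<in>PiE Q (\<lambda>_. ?A). \<Sum>y\<in>Q - {x}. a y T * b y T)"
    unfolding Gs_def using step by simp
  also have "\<dots> = (\<Sum>y\<in>Q - {x}. \<Sum>T\<in>PiE Q (\<lambda>_. ?A). a y T * b y T)"
    by (rule sum.swap)
  also have "\<dots> = (\<Sum>y\<in>Q - {x}. Kx c D tau0 s L x y * Gs c D tau0 s L (Q - {x,y}))"
  proof (rule sum.cong[OF refl])
    fix y assume y: "y \<in> Q - {x}"
    have Qeq: "Q = {x,y} \<union> (Q - {x,y})" using x y by auto
    have "(\<Sum>T\<in>PiE Q (\<lambda>_. ?A). a y T * b y T) =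
       (\<Sum>T\<in>PiE ({x,y} \<union> (Q - {x,y})) (\<lambda>_. ?A). a y T * b y T)"
      using Qeq by simp
    also have "\<dots> = (\<Sum>T\<in>PiE {x,y} (\<lambda>_. ?A). a y T) * (\<Sum>T\<in>PiE (Q - {x,y}) (\<lambda>_. ?A). b y T)"
    proof (rule sum_PiE_split)
      show "finite {x,y}" by simp
      show "finite (Q - {x,y})" using fin by simp
      show "{x,y} \<inter> (Q - {x,y}) = {}" by auto
    next
      fix T T' :: "nat list \<Rightarrow> otree" assume h: "\<And>q. q \<in> {x,y} \<Longrightarrow> T q = T' q"
      have "\<forall>q\<in>{x,y}. length q = L" using len x y by auto
      then show "a y T = a y T'" unfolding a_def using fvQc_cong[of "{x,y}" L T T'] h by simp
    next
      fix T T' :: "nat list \<Rightarrow> otree" assume h: "\<And>q. q \<in> Q - {x,y} \<Longrightarrow> T q = T' q"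
      then show "b y T = b y T'" unfolding b_def using fv_cong[of "Q - {x,y}" T T'] by simp
    qed
    also have "\<dots> = Kx c D tau0 s L x y * Gs c D tau0 s L (Q - {x,y})"
      unfolding Kx_def Gs_def a_def b_def by simp
    finally show "(\<Sum>T\<in>PiE Q (\<lambda>_. ?A). a y T * b y T) = Kx c D tau0 s L x y * Gs c D tau0 s L (Q - {x,y})" .
  qed
  finally show ?thesis .
qed



definition pm :: "nat \<Rightarrow> nat" where
  "pm n = (if even n then odd_dfact (n div 2) else 0)"

lemma pm_0: "pm 0 = 1" by (simp add: pm_def odd_dfact_def)
lemma pm_1: "pm 1 = 0" by (simp add: pm_def)
lemma pm_SS: "pm (Suc (Suc n)) = Suc n * pm n"
proof (cases "even n")
  case True
  then obtain k where k: "n = 2 * k" by blast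
  have "Suc (Suc n) div 2 = Suc k" using k by simp
  then show ?thesis using True k by (simp add: pm_def odd_dfact_def)
next
  case False then show ?thesis by (simp add: pm_def)
qed

lemma odd_dfact_fact: "real (odd_dfact k) * 2 ^ k * fact k = fact (2 * k)"
proof (induction k)
  case 0 then show ?case by (simp add: odd_dfact_def)
next
  case (Suc k)
  have o: "odd_dfact (Suc k) = odd_dfact k * (2 * k + 1)" by (simp add: odd_dfact_def)
  have f: "(fact (2 * Suc k) :: real) = (2 * real k + 2) * (2 * real k + 1) * fact (2 * k)"
    by (simp add: algebra_simps)
  have "real (odd_dfact (Suc k)) * 2 ^ Suc k * fact (Suc k) =
     (real (odd_dfact k) * 2 ^ k * fact k) * ((2 * real k + 1) * (2 * real k + 2))"
    unfolding o by (simp add: algebra_simps)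
  also have "\<dots> = (fact (2 * k) :: real) * ((2 * real k + 1) * (2 * real k + 2))" by (simp only: Suc.IH)
  also have "\<dots> = fact (2 * Suc k)" unfolding f by (simp only: mult_ac)
  finally show ?case .
qed

lemma std_moment: "has_bochner_integral lborel (\<lambda>x. std_normal_density x * x ^ n) (real (pm n))"
proof (cases "even n")
  case True
  then obtain k where k: "n = 2 * k" by blast
  have "fact (2 * k) / (2 ^ k * fact k) = real (odd_dfact k)"
    using odd_dfact_fact[of k] by (simp add: field_simps)
  then show ?thesis using std_normal_moment_even[of k] k by (simp add: pm_def)
next
  case False
  then obtain k where k: "n = 2 * k + 1" by (metis oddE)
  then show ?thesis using std_normal_moment_odd[of k] False by (simp add: pm_def)
qed

lemma Gs_empty: "Gs c D tau0 s L {} = 1"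
proof -
  have "fv {} T = {}" for T by (simp add: fv_def)
  then show ?thesis by (simp add: Gs_def wp_empty)
qed

lemma Gs_from_K:
  assumes K: "\<And>L x y. x \<noteq> y \<Longrightarrow> length x = L \<Longrightarrow> length y = L \<Longrightarrow> Kx c D tau0 s L x y = \<tau>"
  shows "finite Q \<Longrightarrow> \<forall>q\<in>Q. length q = L \<Longrightarrow> Gs c D tau0 s L Q = real (pm (card Q)) * \<tau> ^ (card Q div 2)"
proof (induction "card Q" arbitrary: Q rule: less_induct)
  case less
  show ?case
  proof (cases "Q = {}")
    case True then show ?thesis by (simp add: Gs_empty pm_0)
  next
    case False
    then obtain x where x: "x \<in> Q" by blast
    have "Gs c D tau0 s L Q = (\<Sum>y\<in>Q - {x}. Kx c D tau0 s L x y * Gs c D tau0 s L (Q - {x,y}))"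
      using G_rec[OF less.prems(1,2) x] .
    also have "\<dots> = (\<Sum>y\<in>Q - {x}. \<tau> * (real (pm (card Q - 2)) * \<tau> ^ ((card Q - 2) div 2)))"
    proof (rule sum.cong[OF refl])
      fix y assume y: "y \<in> Q - {x}"
      have c: "card (Q - {x,y}) = card Q - 2" using x y less.prems(1) by (subst card_Diff_subset) auto
      have "Gs c D tau0 s L (Q - {x,y}) = real (pm (card (Q - {x,y}))) * \<tau> ^ (card (Q - {x,y}) div 2)"
      proof -
        have "card {x,y} \<le> card Q" using x y less.prems(1) by (intro card_mono) auto
        moreover have "card {x,y} = 2" using y by auto
        ultimately have "card Q \<ge> 2" by simp
        then have "card (Q - {x,y}) < card Q" using c by simp
        then show ?thesis using less.hyps[of "Q - {x,y}"] less.prems by auto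
      qed
      moreover have "Kx c D tau0 s L x y = \<tau>" using K[of x y L] y x less.prems(2) by auto
      ultimately show "Kx c D tau0 s L x y * Gs c D tau0 s L (Q - {x,y}) =
          \<tau> * (real (pm (card Q - 2)) * \<tau> ^ ((card Q - 2) div 2))" using c by simp
    qed
    also have "\<dots> = real (card Q - 1) * \<tau> * (real (pm (card Q - 2)) * \<tau> ^ ((card Q - 2) div 2))"
      using x less.prems(1) by simp
    also have "\<dots> = real (pm (card Q)) * \<tau> ^ (card Q div 2)"
    proof (cases "card Q = 1")
      case True then show ?thesis by (simp add: pm_def)
    next
      case False
      then obtain n where n: "card Q = Suc (Suc n)" using x less.prems(1)
        by (metis One_nat_def card_0_eq empty_iff not0_implies_Suc)
      show ?thesis unfolding n by (simp add: pm_SS algebra_simps)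
    qed
    finally show ?thesis .
  qed
qed



lemma Av_0: "Av D 0 = {Node []}"
proof -
  have "valid D 0 T \<longleftrightarrow> T = Node []" for T by (cases T) auto
  then show ?thesis unfolding Av_def by auto
qed

lemma Av_Suc: "Av D (Suc s) = Node ` {cs. length cs \<le> D \<and> set cs \<subseteq> Av D s}"
proof -
  have "valid D (Suc s) T \<longleftrightarrow> T \<in> Node ` {cs. length cs \<le> D \<and> set cs \<subseteq> Av D s}" for T
    by (cases T) (auto simp: Av_def)
  then show ?thesis unfolding Av_def by auto
qed

lemma Av_finite: "finite (Av D s)"
proof (induction s)
  case 0 then show ?case by (simp add: Av_0)
next
  case (Suc s)
  have "finite {cs. set cs \<subseteq> Av D s \<and> length cs \<le> D}"
    using finite_lists_length_le[OF Suc.IH] by simp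
  then show ?case unfolding Av_Suc by (simp add: conj_commute)
qed

definition pt :: "nat list \<Rightarrow> otree \<Rightarrow> otree \<Rightarrow> nat list \<Rightarrow> otree" where
  "pt x a b = (\<lambda>q. if q = x then a else b)"

lemma sum_PiE_pair:
  fixes F :: "(nat list \<Rightarrow> otree) \<Rightarrow> real"
  assumes xy: "x \<noteq> y" and cong: "\<And>T T'. T x = T' x \<Longrightarrow> T y = T' y \<Longrightarrow> F T = F T'"
  shows "(\<Sum>T\<in>PiE {x,y} (\<lambda>_. A). F T) = (\<Sum>a\<in>A. \<Sum>b\<in>A. F (pt x a b))"
proof -
  let ?h = "\<lambda>(a,b). restrict (pt x a b) {x,y}"
  have bij: "bij_betw ?h (A \<times> A) (PiE {x,y} (\<lambda>_. A))"
  proof (rule bij_betw_byWitness[where f'="\<lambda>T. (T x, T y)"])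
    show "\<forall>p\<in>A \<times> A. (\<lambda>T. (T x, T y)) (?h p) = p" using xy by (auto simp: pt_def)
    show "\<forall>T\<in>PiE {x,y} (\<lambda>_. A). ?h ((\<lambda>T. (T x, T y)) T) = T"
    proof
      fix T assume T: "T \<in> PiE {x,y} (\<lambda>_. A)"
      show "?h ((\<lambda>T. (T x, T y)) T) = T"
      proof
        fix q show "?h ((\<lambda>T. (T x, T y)) T) q = T q"
          using PiE_arb[OF T, of q] by (auto simp: pt_def)
      qed
    qed
    show "?h ` (A \<times> A) \<subseteq> PiE {x,y} (\<lambda>_. A)" by (auto simp: pt_def split: if_splits)
    show "(\<lambda>T. (T x, T y)) ` PiE {x,y} (\<lambda>_. A) \<subseteq> A \<times> A" by auto
  qed
  have "(\<Sum>T\<in>PiE {x,y} (\<lambda>_. A). F T) = (\<Sum>p\<in>A \<times> A. F (?h p))"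
    using sum.reindex_bij_betw[OF bij, of F] by simp
  also have "\<dots> = (\<Sum>p\<in>A \<times> A. F (pt x (fst p) (snd p)))"
  proof (rule sum.cong[OF refl])
    fix p :: "otree \<times> otree"
    obtain a b where p: "p = (a,b)" by force
    show "F (?h p) = F (pt x (fst p) (snd p))" using p xy by (intro cong) (auto simp: pt_def)
  qed
  also have "\<dots> = (\<Sum>a\<in>A. \<Sum>b\<in>A. F (pt x a b))"
    by (simp add: sum.cartesian_product split_beta)
  finally show ?thesis .
qed

lemma Kx_pt:
  assumes xy: "x \<noteq> y" and len: "length x = L" "length y = L"
  shows "Kx c D tau0 s L x y = (\<Sum>a\<in>Av D s. \<Sum>b\<in>Av D s.
     real (card (wpset (fv (Qc {x,y} (pt x a b)) (Tc L (pt x a b))) (Suc L))) * wt c tau0 s a * wt c tau0 s b)"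
proof -
  have "Kx c D tau0 s L x y = (\<Sum>a\<in>Av D s. \<Sum>b\<in>Av D s.
     real (card (wpset (fv (Qc {x,y} (pt x a b)) (Tc L (pt x a b))) (Suc L))) * wt c tau0 s (pt x a b x) * wt c tau0 s (pt x a b y))"
    unfolding Kx_def
  proof (rule sum_PiE_pair[OF xy])
    fix T T' :: "nat list \<Rightarrow> otree" assume h: "T x = T' x" "T y = T' y"
    have "\<forall>q\<in>{x,y}. length q = L" using len by auto
    moreover have "\<And>q. q \<in> {x,y} \<Longrightarrow> T q = T' q" using h by auto
    ultimately have "fv (Qc {x,y} T) (Tc L T) = fv (Qc {x,y} T') (Tc L T')" by (rule fvQc_cong)
    then show "real (card (wpset (fv (Qc {x,y} T) (Tc L T)) (Suc L))) * wt c tau0 s (T x) * wt c tau0 s (T y) =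
      real (card (wpset (fv (Qc {x,y} T') (Tc L T')) (Suc L))) * wt c tau0 s (T' x) * wt c tau0 s (T' y)"
      using h by simp
  qed
  then show ?thesis using xy by (simp add: pt_def)
qed

lemma Kx_0:
  assumes xy: "x \<noteq> y" and len: "length x = L" "length y = L"
  shows "Kx c D tau0 0 L x y = tau0 ^ 2"
proof -
  have "Qc {x,y} (pt x (Node []) (Node [])) = {}" by (simp add: Qc_def pt_def)
  moreover have "fv {} T = {}" for T by (simp add: fv_def)
  ultimately show ?thesis using Kx_pt[OF assms, of c D tau0 0]
    by (simp add: Av_0 wp_empty wt_def power2_eq_square)
qed

lemma tau2_1: "tau2 c D tau0 (Suc 0) = tau0 ^ 2"
proof -
  have "(\<lambda>x. std_normal_density x * (fpoly c D 0 (sqrt (tau0 ^ 2) * x))\<^sup>2) =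
        (\<lambda>x. tau0 ^ 2 * (std_normal_density x * x ^ 2))"
    by (auto simp: fpoly_def power_mult_distrib fun_eq_iff)
  moreover have "has_bochner_integral lborel (\<lambda>x. std_normal_density x * x ^ 2) 1"
    using std_moment[of 2] by (simp add: pm_def odd_dfact_def)
  ultimately show ?thesis
    by (simp add: has_bochner_integral_integral_eq has_bochner_integral_mult_right)
qed



definition Qdd :: "nat list \<Rightarrow> nat list \<Rightarrow> nat \<Rightarrow> nat \<Rightarrow> nat list set" where
  "Qdd x y d d' = (\<lambda>k. x @ [k]) ` {..<d} \<union> (\<lambda>k. y @ [k]) ` {..<d'}"

definition LL :: "nat \<Rightarrow> nat \<Rightarrow> nat \<Rightarrow> otree list set" where
  "LL D s d = {cs. length cs = d \<and> set cs \<subseteq> Av D s}"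

lemma prod_list_nth: "prod_list (map f cs) = (\<Prod>k<length cs. f (cs ! k))"
proof (induction cs)
  case Nil then show ?case by simp
next
  case (Cons a cs) then show ?case by (simp del: prod.lessThan_Suc add: prod.lessThan_Suc_shift)
qed

lemma prod_list_mult: "prod_list (map f cs) * prod_list (map g cs) = prod_list (map (\<lambda>t. f t * g t) cs)"
  for f g :: "'a \<Rightarrow> real"
  by (induction cs) (simp_all add: mult_ac)

lemma power_sum_list: "(a::real) ^ sum_list (map f cs) = prod_list (map (\<lambda>t. a ^ f t) cs)"
  by (induction cs) (simp_all add: power_add)

lemma wt_Node: "wt c tau0 (Suc s) (Node cs) = c (Suc s) (length cs) * prod_list (map (wt c tau0 s) cs)"
  unfolding wt_def by (simp add: power_sum_list prod_list_mult[symmetric] mult_ac)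

lemma LL_finite: "finite (LL D s d)"
  unfolding LL_def using finite_lists_length_eq[OF Av_finite] by (simp add: conj_commute)

lemma Qdd_disj: "x \<noteq> y \<Longrightarrow> length x = length y \<Longrightarrow>
   (\<lambda>k. x @ [k]) ` {..<d} \<inter> (\<lambda>k. y @ [k]) ` {..<d'} = {}"
  by auto

lemma card_Qdd: "x \<noteq> y \<Longrightarrow> length x = length y \<Longrightarrow> card (Qdd x y d d') = d + d'"
proof -
  assume a: "x \<noteq> y" "length x = length y"
  have "card (Qdd x y d d') = card ((\<lambda>k. x @ [k]) ` {..<d}) + card ((\<lambda>k. y @ [k]) ` {..<d'})"
    unfolding Qdd_def by (rule card_Un_disjoint) (use Qdd_disj[OF a] in auto)
  also have "\<dots> = d + d'" by (subst card_image; simp add: inj_on_def)+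
  finally show ?thesis .
qed

lemma Qc_pt: "x \<noteq> y \<Longrightarrow> Qc {x,y} (pt x (Node cs) (Node cs')) = Qdd x y (length cs) (length cs')"
  unfolding Qc_def Qdd_def pt_def by auto

lemma Tc_x: "length x = L \<Longrightarrow> Tc L (pt x a b) (x @ [k]) = children a ! k"
  unfolding Tc_def pt_def by (simp add: nth_append)

lemma Tc_y: "length y = L \<Longrightarrow> x \<noteq> y \<Longrightarrow> Tc L (pt x a b) (y @ [k]) = children b ! k"
  unfolding Tc_def pt_def by (simp add: nth_append)

lemma Qdd_mem: "q \<in> Qdd x y d d' \<longleftrightarrow> (\<exists>k<d. q = x @ [k]) \<or> (\<exists>k<d'. q = y @ [k])"
  unfolding Qdd_def by auto

lemma inner:
  assumes xy: "x \<noteq> y" and len: "length x = L" "length y = L"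
  shows "(\<Sum>cs\<in>LL D s d. \<Sum>cs'\<in>LL D s d'.
     real (card (wpset (fv (Qc {x,y} (pt x (Node cs) (Node cs'))) (Tc L (pt x (Node cs) (Node cs')))) (Suc L)))
       * prod_list (map (wt c tau0 s) cs) * prod_list (map (wt c tau0 s) cs'))
    = Gs c D tau0 s (Suc L) (Qdd x y d d')"
proof -
  let ?Q = "Qdd x y d d'"
  let ?P = "\<lambda>cs cs'. pt x (Node cs) (Node cs')"
  let ?h = "\<lambda>(cs, cs'). restrict (Tc L (?P cs cs')) ?Q"
  let ?g = "\<lambda>T. (map (\<lambda>k. T (x @ [k])) [0..<d], map (\<lambda>k. T (y @ [k])) [0..<d'])"
  have xin: "k < d \<Longrightarrow> x @ [k] \<in> ?Q" for k unfolding Qdd_def by auto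
  have yin: "k < d' \<Longrightarrow> y @ [k] \<in> ?Q" for k unfolding Qdd_def by auto
  have bij: "bij_betw ?h (LL D s d \<times> LL D s d') (PiE ?Q (\<lambda>_. Av D s))"
  proof (rule bij_betw_byWitness[where f'="?g"])
    show "\<forall>p\<in>LL D s d \<times> LL D s d'. ?g (?h p) = p"
    proof
      fix p assume "p \<in> LL D s d \<times> LL D s d'"
      then obtain cs cs' where p: "p = (cs, cs')" "length cs = d" "length cs' = d'" unfolding LL_def by auto
      have 1: "map (\<lambda>k. ?h p (x @ [k])) [0..<d] = cs"
        using p xin Tc_x[OF len(1)] by (intro nth_equalityI) auto
      have 2: "map (\<lambda>k. ?h p (y @ [k])) [0..<d'] = cs'"
        using p yin Tc_y[OF len(2) xy] by (intro nth_equalityI) auto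
      show "?g (?h p) = p" using 1 2 p(1) by simp
    qed
    show "\<forall>T\<in>PiE ?Q (\<lambda>_. Av D s). ?h (?g T) = T"
    proof
      fix T assume T: "T \<in> PiE ?Q (\<lambda>_. Av D s)"
      show "?h (?g T) = T"
      proof
        fix q
        show "?h (?g T) q = T q"
        proof (cases "q \<in> ?Q")
          case False then show ?thesis using PiE_arb[OF T False] by simp
        next
          case True
          then consider k where "k < d" "q = x @ [k]" | k where "k < d'" "q = y @ [k]"
            unfolding Qdd_mem by blast
          then show ?thesis
          proof cases
            case 1 then show ?thesis using True Tc_x[OF len(1)] by simp
          next
            case 2 then show ?thesis using True Tc_y[OF len(2) xy] by simp
          qed
        qed
      qed
    qed
    show "?h ` (LL D s d \<times> LL D s d') \<subseteq> PiE ?Q (\<lambda>_. Av D s)"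
    proof (rule image_subsetI)
      fix p assume "p \<in> LL D s d \<times> LL D s d'"
      then obtain cs cs' where p: "p = (cs, cs')" "length cs = d" "length cs' = d'"
        "set cs \<subseteq> Av D s" "set cs' \<subseteq> Av D s" unfolding LL_def by auto
      have "Tc L (?P cs cs') q \<in> Av D s" if q: "q \<in> ?Q" for q
      proof -
        from q consider k where "k < d" "q = x @ [k]" | k where "k < d'" "q = y @ [k]"
          unfolding Qdd_mem by blast
        then show ?thesis
        proof cases
          case 1 then show ?thesis using Tc_x[OF len(1)] p by (auto simp: nth_mem subset_iff)
        next
          case 2 then show ?thesis using Tc_y[OF len(2) xy] p by (auto simp: nth_mem subset_iff)
        qed
      qed
      then show "?h p \<in> PiE ?Q (\<lambda>_. Av D s)" using p(1) by simp
    qed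
    show "?g ` PiE ?Q (\<lambda>_. Av D s) \<subseteq> LL D s d \<times> LL D s d'"
    proof (rule image_subsetI)
      fix T assume T: "T \<in> PiE ?Q (\<lambda>_. Av D s)"
      have "T (x @ [k]) \<in> Av D s" if "k < d" for k using PiE_mem[OF T xin[OF that]] .
      moreover have "T (y @ [k]) \<in> Av D s" if "k < d'" for k using PiE_mem[OF T yin[OF that]] .
      ultimately show "?g T \<in> LL D s d \<times> LL D s d'" unfolding LL_def by auto
    qed
  qed
  let ?F = "\<lambda>T. real (card (wpset (fv ?Q T) (Suc L))) * (\<Prod>q\<in>?Q. wt c tau0 s (T q))"
  have "Gs c D tau0 s (Suc L) ?Q = (\<Sum>p\<in>LL D s d \<times> LL D s d'. ?F (?h p))"
    unfolding Gs_def using sum.reindex_bij_betw[OF bij, of ?F] by simp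
  also have "\<dots> = (\<Sum>p\<in>LL D s d \<times> LL D s d'.
     real (card (wpset (fv (Qc {x,y} (?P (fst p) (snd p))) (Tc L (?P (fst p) (snd p)))) (Suc L)))
       * prod_list (map (wt c tau0 s) (fst p)) * prod_list (map (wt c tau0 s) (snd p)))"
  proof (rule sum.cong[OF refl])
    fix p assume "p \<in> LL D s d \<times> LL D s d'"
    then obtain cs cs' where p: "p = (cs, cs')" "length cs = d" "length cs' = d'" unfolding LL_def by auto
    have Qc: "Qc {x,y} (?P cs cs') = ?Q" using Qc_pt[OF xy] p by simp
    have fveq: "fv ?Q (?h p) = fv ?Q (Tc L (?P cs cs'))" using p(1) by (intro fv_cong) simp
    have "(\<Prod>q\<in>?Q. wt c tau0 s (?h p q)) =
       (\<Prod>q\<in>(\<lambda>k. x @ [k]) ` {..<d}. wt c tau0 s (?h p q)) * (\<Prod>q\<in>(\<lambda>k. y @ [k]) ` {..<d'}. wt c tau0 s (?h p q))"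
      unfolding Qdd_def by (rule prod.union_disjoint) (use Qdd_disj[OF xy] len in auto)
    also have "(\<Prod>q\<in>(\<lambda>k. x @ [k]) ` {..<d}. wt c tau0 s (?h p q)) = (\<Prod>k<d. wt c tau0 s (cs ! k))"
      by (subst prod.reindex) (auto simp: inj_on_def p(1) xin Tc_x[OF len(1)])
    also have "(\<Prod>q\<in>(\<lambda>k. y @ [k]) ` {..<d'}. wt c tau0 s (?h p q)) = (\<Prod>k<d'. wt c tau0 s (cs' ! k))"
      by (subst prod.reindex) (auto simp: inj_on_def p(1) yin Tc_y[OF len(2) xy])
    finally have pr: "(\<Prod>q\<in>?Q. wt c tau0 s (?h p q)) = prod_list (map (wt c tau0 s) cs) * prod_list (map (wt c tau0 s) cs')"
      using p by (simp add: prod_list_nth)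
    show "?F (?h p) = real (card (wpset (fv (Qc {x,y} (?P (fst p) (snd p))) (Tc L (?P (fst p) (snd p)))) (Suc L)))
       * prod_list (map (wt c tau0 s) (fst p)) * prod_list (map (wt c tau0 s) (snd p))"
      using Qc fveq pr p(1) by (simp add: mult.assoc)
  qed
  also have "\<dots> = (\<Sum>cs\<in>LL D s d. \<Sum>cs'\<in>LL D s d'.
     real (card (wpset (fv (Qc {x,y} (?P cs cs')) (Tc L (?P cs cs'))) (Suc L)))
       * prod_list (map (wt c tau0 s) cs) * prod_list (map (wt c tau0 s) cs'))"
    by (simp add: sum.cartesian_product split_beta)
  finally show ?thesis by simp
qed



lemma sum_Av_Suc:
  fixes f :: "otree \<Rightarrow> real"
  shows "(\<Sum>a\<in>Av D (Suc s). f a) = (\<Sum>d\<le>D. \<Sum>cs\<in>LL D s d. f (Node cs))"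
proof -
  have e: "{cs. length cs \<le> D \<and> set cs \<subseteq> Av D s} = (\<Union>d\<in>{..D}. LL D s d)"
    unfolding LL_def by auto
  have "(\<Sum>a\<in>Av D (Suc s). f a) = (\<Sum>cs\<in>(\<Union>d\<in>{..D}. LL D s d). f (Node cs))"
    unfolding Av_Suc e by (subst sum.reindex) (auto simp: inj_on_def)
  also have "\<dots> = (\<Sum>d\<le>D. \<Sum>cs\<in>LL D s d. f (Node cs))"
    by (rule sum.UNION_disjoint) (auto simp: LL_finite, auto simp: LL_def)
  finally show ?thesis .
qed

lemma Kx_Suc:
  assumes xy: "x \<noteq> y" and len: "length x = L" "length y = L"
  shows "Kx c D tau0 (Suc s) L x y =
    (\<Sum>d\<le>D. \<Sum>d'\<le>D. c (Suc s) d * c (Suc s) d' * Gs c D tau0 s (Suc L) (Qdd x y d d'))"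
proof -
  let ?H = "\<lambda>a b. real (card (wpset (fv (Qc {x,y} (pt x a b)) (Tc L (pt x a b))) (Suc L))) *
      wt c tau0 (Suc s) a * wt c tau0 (Suc s) b"
  have eq1: "(\<Sum>cs\<in>LL D s d. \<Sum>cs'\<in>LL D s d'. ?H (Node cs) (Node cs')) =
     c (Suc s) d * c (Suc s) d' * Gs c D tau0 s (Suc L) (Qdd x y d d')" for d d'
  proof -
    have "(\<Sum>cs\<in>LL D s d. \<Sum>cs'\<in>LL D s d'. ?H (Node cs) (Node cs')) =
      (\<Sum>cs\<in>LL D s d. \<Sum>cs'\<in>LL D s d'. c (Suc s) d * c (Suc s) d' *
        (real (card (wpset (fv (Qc {x,y} (pt x (Node cs) (Node cs'))) (Tc L (pt x (Node cs) (Node cs')))) (Suc L)))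
       * prod_list (map (wt c tau0 s) cs) * prod_list (map (wt c tau0 s) cs')))"
      by (intro sum.cong refl) (auto simp: wt_Node LL_def mult_ac)
    also have "\<dots> = c (Suc s) d * c (Suc s) d' * (\<Sum>cs\<in>LL D s d. \<Sum>cs'\<in>LL D s d'.
        real (card (wpset (fv (Qc {x,y} (pt x (Node cs) (Node cs'))) (Tc L (pt x (Node cs) (Node cs')))) (Suc L)))
       * prod_list (map (wt c tau0 s) cs) * prod_list (map (wt c tau0 s) cs'))"
      by (simp add: sum_distrib_left)
    also have "\<dots> = c (Suc s) d * c (Suc s) d' * Gs c D tau0 s (Suc L) (Qdd x y d d')"
      using inner[OF xy len] by simp
    finally show ?thesis .
  qed
  have "Kx c D tau0 (Suc s) L x y = (\<Sum>a\<in>Av D (Suc s). \<Sum>b\<in>Av D (Suc s). ?H a b)"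
    using Kx_pt[OF xy len] by simp
  also have "\<dots> = (\<Sum>d\<le>D. \<Sum>cs\<in>LL D s d. \<Sum>d'\<le>D. \<Sum>cs'\<in>LL D s d'. ?H (Node cs) (Node cs'))"
    by (simp add: sum_Av_Suc)
  also have "\<dots> = (\<Sum>d\<le>D. \<Sum>d'\<le>D. \<Sum>cs\<in>LL D s d. \<Sum>cs'\<in>LL D s d'. ?H (Node cs) (Node cs'))"
    by (intro sum.cong refl sum.swap)
  also have "\<dots> = (\<Sum>d\<le>D. \<Sum>d'\<le>D. c (Suc s) d * c (Suc s) d' * Gs c D tau0 s (Suc L) (Qdd x y d d'))"
    using eq1 by simp
  finally show ?thesis .
qed

lemma tau2_nonneg: "tau2 c D tau0 (Suc s) \<ge> 0"
  by (simp add: integral_nonneg_AE)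

lemma tau2_SS: "tau2 c D tau0 (Suc (Suc s)) = (\<Sum>d\<le>D. \<Sum>d'\<le>D.
    c (Suc s) d * c (Suc s) d' * (real (pm (d + d')) * tau2 c D tau0 (Suc s) ^ ((d + d') div 2)))"
proof -
  let ?t = "tau2 c D tau0 (Suc s)"
  let ?\<sigma> = "sqrt ?t"
  let ?a = "c (Suc s)"
  have sq: "?\<sigma> ^ 2 = ?t" using tau2_nonneg[of c D tau0 s] by simp
  have pw: "?\<sigma> ^ n * real (pm n) = ?t ^ (n div 2) * real (pm n)" for n
  proof (cases "even n")
    case True
    then obtain k where "n = 2 * k" by blast
    then show ?thesis using sq by (simp add: power_mult)
  next
    case False then show ?thesis by (simp add: pm_def)
  qed
  have f: "(\<lambda>x. std_normal_density x * (fpoly c D (Suc s) (?\<sigma> * x))\<^sup>2) =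
     (\<lambda>x. \<Sum>d\<le>D. \<Sum>d'\<le>D. (?a d * ?a d' * ?\<sigma> ^ (d + d')) * (std_normal_density x * x ^ (d + d')))"
  proof
    fix x
    have "(fpoly c D (Suc s) (?\<sigma> * x))\<^sup>2 = (\<Sum>d\<le>D. ?a d * (?\<sigma> * x) ^ d) * (\<Sum>d'\<le>D. ?a d' * (?\<sigma> * x) ^ d')"
      by (simp add: fpoly_def power2_eq_square)
    also have "\<dots> = (\<Sum>d\<le>D. \<Sum>d'\<le>D. ?a d * (?\<sigma> * x) ^ d * (?a d' * (?\<sigma> * x) ^ d'))"
      by (rule sum_product)
    finally show "std_normal_density x * (fpoly c D (Suc s) (?\<sigma> * x))\<^sup>2 =
       (\<Sum>d\<le>D. \<Sum>d'\<le>D. (?a d * ?a d' * ?\<sigma> ^ (d + d')) * (std_normal_density x * x ^ (d + d')))"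
      by (simp add: sum_distrib_left power_add power_mult_distrib mult_ac)
  qed
  have "has_bochner_integral lborel
     (\<lambda>x. \<Sum>d\<le>D. \<Sum>d'\<le>D. (?a d * ?a d' * ?\<sigma> ^ (d + d')) * (std_normal_density x * x ^ (d + d')))
     (\<Sum>d\<le>D. \<Sum>d'\<le>D. (?a d * ?a d' * ?\<sigma> ^ (d + d')) * real (pm (d + d')))"
    by (intro has_bochner_integral_sum has_bochner_integral_mult_right std_moment)
  then have hb: "integral\<^sup>L lborel
     (\<lambda>x. \<Sum>d\<le>D. \<Sum>d'\<le>D. (?a d * ?a d' * ?\<sigma> ^ (d + d')) * (std_normal_density x * x ^ (d + d')))
     = (\<Sum>d\<le>D. \<Sum>d'\<le>D. (?a d * ?a d' * ?\<sigma> ^ (d + d')) * real (pm (d + d')))"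
    by (rule has_bochner_integral_integral_eq)
  have "tau2 c D tau0 (Suc (Suc s)) = integral\<^sup>L lborel (\<lambda>x. std_normal_density x * (fpoly c D (Suc s) (?\<sigma> * x))\<^sup>2)"
    by simp
  also have "\<dots> = (\<Sum>d\<le>D. \<Sum>d'\<le>D. (?a d * ?a d' * ?\<sigma> ^ (d + d')) * real (pm (d + d')))"
    unfolding f hb ..
  also have "\<dots> = (\<Sum>d\<le>D. \<Sum>d'\<le>D. ?a d * ?a d' * (real (pm (d + d')) * ?t ^ ((d + d') div 2)))"
  proof (intro sum.cong refl)
    fix d d'
    show "?a d * ?a d' * ?\<sigma> ^ (d + d') * real (pm (d + d')) = ?a d * ?a d' * (real (pm (d + d')) * ?t ^ ((d + d') div 2))"
      using pw[of "d + d'"] by (simp add: mult_ac)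
  qed
  finally show ?thesis .
qed



lemma Gs_main:
  "finite Q \<Longrightarrow> \<forall>q\<in>Q. length q = L \<Longrightarrow>
   Gs c D tau0 s L Q = real (pm (card Q)) * tau2 c D tau0 (Suc s) ^ (card Q div 2)"
proof (induction s arbitrary: L Q)
  case 0
  show ?case
  proof (rule Gs_from_K[OF _ 0(1,2)])
    fix L' x y :: "nat list" and L'' :: nat
    show "x \<noteq> y \<Longrightarrow> length x = L'' \<Longrightarrow> length y = L'' \<Longrightarrow> Kx c D tau0 0 L'' x y = tau2 c D tau0 (Suc 0)"
      using Kx_0 tau2_1 by metis
  qed
next
  case (Suc s)
  show ?case
  proof (rule Gs_from_K[OF _ Suc.prems])
    fix x y :: "nat list" and L'' :: nat
    assume xy: "x \<noteq> y" and len: "length x = L''" "length y = L''"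
    have "Kx c D tau0 (Suc s) L'' x y =
      (\<Sum>d\<le>D. \<Sum>d'\<le>D. c (Suc s) d * c (Suc s) d' * Gs c D tau0 s (Suc L'') (Qdd x y d d'))"
      by (rule Kx_Suc[OF xy len])
    also have "\<dots> = (\<Sum>d\<le>D. \<Sum>d'\<le>D.
       c (Suc s) d * c (Suc s) d' * (real (pm (d + d')) * tau2 c D tau0 (Suc s) ^ ((d + d') div 2)))"
    proof (intro sum.cong refl)
      fix d d'
      have fin: "finite (Qdd x y d d')" unfolding Qdd_def by simp
      have ln: "\<forall>q\<in>Qdd x y d d'. length q = Suc L''" unfolding Qdd_def using len by auto
      show "c (Suc s) d * c (Suc s) d' * Gs c D tau0 s (Suc L'') (Qdd x y d d') =
         c (Suc s) d * c (Suc s) d' * (real (pm (d + d')) * tau2 c D tau0 (Suc s) ^ ((d + d') div 2))"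
        using Suc.IH[OF fin ln] card_Qdd[OF xy] len by simp
    qed
    also have "\<dots> = tau2 c D tau0 (Suc (Suc s))" by (rule tau2_SS[symmetric])
    finally show "Kx c D tau0 (Suc s) L'' x y = tau2 c D tau0 (Suc (Suc s))" .
  qed
qed



definition Q1 :: "nat \<Rightarrow> nat list set" where "Q1 n = (\<lambda>i. [i]) ` {..<n}"

lemma pos_Node: "length cs = n \<Longrightarrow> positions (Node cs) = insert [] (fv (Q1 n) (\<lambda>q. cs ! hd q))"
  unfolding fv_alt Q1_def by auto

lemma wick_eq:
  assumes "length cs = n"
  shows "Wick (Node cs) = card (wpset (fv (Q1 n) (\<lambda>q. cs ! hd q)) 1)"
proof -
  have v: "l \<ge> 1 \<Longrightarrow> verts_at (Node cs) l = rowv (fv (Q1 n) (\<lambda>q. cs ! hd q)) l" for l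
    unfolding verts_at_def rowv_def pos_Node[OF assms] by auto
  have "wick_pairings (Node cs) = wpset (fv (Q1 n) (\<lambda>q. cs ! hd q)) 1"
    unfolding wick_pairings_def wpset_def
  proof (intro Collect_cong)
    fix \<pi> :: "nat \<Rightarrow> nat list set set"
    have a: "(\<pi> 0 = {}) = (\<forall>l<1. \<pi> l = {})" by auto
    have b: "(\<forall>l\<ge>1. is_pairing (verts_at (Node cs) l) (\<pi> l)) =
             (\<forall>l\<ge>1. is_pairing (rowv (fv (Q1 n) (\<lambda>q. cs ! hd q)) l) (\<pi> l))" using v by auto
    have c: "(\<forall>l\<ge>2. \<forall>v v'. {v, v'} \<in> \<pi> l \<longrightarrow> butlast v = butlast v' \<or> {butlast v, butlast v'} \<in> \<pi> (l - 1)) =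
             (\<forall>l>1. \<forall>v v'. {v, v'} \<in> \<pi> l \<longrightarrow> butlast v = butlast v' \<or> {butlast v, butlast v'} \<in> \<pi> (l - 1))"
      by (metis Suc_1 Suc_le_eq)
    show "(\<pi> 0 = {} \<and> (\<forall>l\<ge>1. is_pairing (verts_at (Node cs) l) (\<pi> l)) \<and>
       (\<forall>l\<ge>2. \<forall>v v'. {v, v'} \<in> \<pi> l \<longrightarrow> butlast v = butlast v' \<or> {butlast v, butlast v'} \<in> \<pi> (l - 1))) =
      ((\<forall>l<1. \<pi> l = {}) \<and> (\<forall>l\<ge>1. is_pairing (rowv (fv (Q1 n) (\<lambda>q. cs ! hd q)) l) (\<pi> l)) \<and>
       (\<forall>l>1. \<forall>v v'. {v, v'} \<in> \<pi> l \<longrightarrow> butlast v = butlast v' \<or> {butlast v, butlast v'} \<in> \<pi> (l - 1)))"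
      using a b c by simp
  qed
  then show ?thesis unfolding Wick_def by simp
qed

lemma trees_eq: "trees D t m = Node ` LL D (t - 1) (2 * m)"
  unfolding trees_def LL_def Av_def by auto

lemma weight_eq:
  "tree_weight c t (Node cs) * tau0 ^ num_leaves t (Node cs) = prod_list (map (wt c tau0 (t - 1)) cs)"
  unfolding tree_weight_def num_leaves_def wt_def by (simp add: power_sum_list prod_list_mult)

lemma sum_eq:
  "(\<Sum>cs\<in>LL D s n. real (card (wpset (fv (Q1 n) (\<lambda>q. cs ! hd q)) 1)) * prod_list (map (wt c tau0 s) cs))
   = Gs c D tau0 s 1 (Q1 n)"
proof -
  let ?h = "\<lambda>cs. restrict (\<lambda>q. cs ! hd q) (Q1 n)"
  let ?g = "\<lambda>T. map (\<lambda>i. T [i]) [0..<n]"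
  have bij: "bij_betw ?h (LL D s n) (PiE (Q1 n) (\<lambda>_. Av D s))"
  proof (rule bij_betw_byWitness[where f'="?g"])
    show "\<forall>cs\<in>LL D s n. ?g (?h cs) = cs"
    proof
      fix cs assume "cs \<in> LL D s n"
      then have "length cs = n" unfolding LL_def by simp
      then show "?g (?h cs) = cs" by (intro nth_equalityI) (auto simp: Q1_def)
    qed
    show "\<forall>T\<in>PiE (Q1 n) (\<lambda>_. Av D s). ?h (?g T) = T"
    proof
      fix T assume T: "T \<in> PiE (Q1 n) (\<lambda>_. Av D s)"
      show "?h (?g T) = T"
      proof
        fix q show "?h (?g T) q = T q"
        proof (cases "q \<in> Q1 n")
          case False then show ?thesis using PiE_arb[OF T False] by simp
        next
          case True then obtain i where "i < n" "q = [i]" unfolding Q1_def by blast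
          then show ?thesis using True by simp
        qed
      qed
    qed
    show "?h ` LL D s n \<subseteq> PiE (Q1 n) (\<lambda>_. Av D s)"
      by (auto simp: LL_def Q1_def nth_mem subset_iff)
    show "?g ` PiE (Q1 n) (\<lambda>_. Av D s) \<subseteq> LL D s n"
    proof (rule image_subsetI)
      fix T assume T: "T \<in> PiE (Q1 n) (\<lambda>_. Av D s)"
      have "T [i] \<in> Av D s" if "i < n" for i using PiE_mem[OF T] that unfolding Q1_def by blast
      then show "?g T \<in> LL D s n" unfolding LL_def by auto
    qed
  qed
  let ?F = "\<lambda>T. real (card (wpset (fv (Q1 n) T) 1)) * (\<Prod>q\<in>Q1 n. wt c tau0 s (T q))"
  have "Gs c D tau0 s 1 (Q1 n) = (\<Sum>cs\<in>LL D s n. ?F (?h cs))"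
    unfolding Gs_def using sum.reindex_bij_betw[OF bij, of ?F] by simp
  also have "\<dots> = (\<Sum>cs\<in>LL D s n. real (card (wpset (fv (Q1 n) (\<lambda>q. cs ! hd q)) 1)) * prod_list (map (wt c tau0 s) cs))"
  proof (rule sum.cong[OF refl])
    fix cs assume "cs \<in> LL D s n"
    then have l: "length cs = n" unfolding LL_def by simp
    have "fv (Q1 n) (?h cs) = fv (Q1 n) (\<lambda>q. cs ! hd q)" by (intro fv_cong) simp
    moreover have "(\<Prod>q\<in>Q1 n. wt c tau0 s (?h cs q)) = prod_list (map (wt c tau0 s) cs)"
      unfolding Q1_def prod_list_nth l
      by (subst prod.reindex) (auto simp: inj_on_def)
    ultimately show "?F (?h cs) = real (card (wpset (fv (Q1 n) (\<lambda>q. cs ! hd q)) 1)) * prod_list (map (wt c tau0 s) cs)"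
      by simp
  qed
  finally show ?thesis by simp
qed

theorem proposition4p2:
  fixes c :: "nat \<Rightarrow> nat \<Rightarrow> real" and D t m :: nat and tau0 :: real
  assumes "tau0 > 0" and "t \<ge> 1" and "m \<ge> 1"
  shows "tau2 c D tau0 t ^ m * real (odd_dfact m) =
    (\<Sum>T\<in>trees D t m. real (Wick T) * tree_weight c t T * tau0 ^ num_leaves t T)"
proof -
  have "(\<Sum>T\<in>trees D t m. real (Wick T) * tree_weight c t T * tau0 ^ num_leaves t T) =
      (\<Sum>cs\<in>LL D (t - 1) (2 * m). real (Wick (Node cs)) * tree_weight c t (Node cs) * tau0 ^ num_leaves t (Node cs))"
    unfolding trees_eq by (subst sum.reindex) (auto simp: inj_on_def)
  also have "\<dots> = (\<Sum>cs\<in>LL D (t - 1) (2 * m). real (card (wpset (fv (Q1 (2 * m)) (\<lambda>q. cs ! hd q)) 1)) *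
       prod_list (map (wt c tau0 (t - 1)) cs))"
  proof (rule sum.cong[OF refl])
    fix cs assume "cs \<in> LL D (t - 1) (2 * m)"
    then have l: "length cs = 2 * m" unfolding LL_def by simp
    show "real (Wick (Node cs)) * tree_weight c t (Node cs) * tau0 ^ num_leaves t (Node cs) =
      real (card (wpset (fv (Q1 (2 * m)) (\<lambda>q. cs ! hd q)) 1)) * prod_list (map (wt c tau0 (t - 1)) cs)"
      using wick_eq[OF l] weight_eq[of c t cs tau0] by (simp add: mult.assoc)
  qed
  also have "\<dots> = Gs c D tau0 (t - 1) 1 (Q1 (2 * m))" by (rule sum_eq)
  also have "\<dots> = real (pm (2 * m)) * tau2 c D tau0 t ^ m"
  proof -
    have "card (Q1 (2 * m)) = 2 * m" unfolding Q1_def by (subst card_image) (auto simp: inj_on_def)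
    moreover have "finite (Q1 (2 * m))" "\<forall>q\<in>Q1 (2 * m). length q = 1" unfolding Q1_def by auto
    ultimately show ?thesis using Gs_main[of "Q1 (2 * m)" 1 c D tau0 "t - 1"] assms(2) by simp
  qed
  also have "\<dots> = tau2 c D tau0 t ^ m * real (odd_dfact m)" by (simp add: pm_def)
  finally show ?thesis by simp
qed


end
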